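(* Let $tr$ be the translation from types and sequents of the Lambek calculus $\mathrm{L}$ to types and graph sequents of the hypergraph Lambek calculus $\mathrm{HL}$ defined by $tr(p)=p$ for primitive $p$ (with $type(p)=2$), $tr(A/B)=tr(A)\div(\$\,tr(B))^\bullet$, $tr(B\backslash A)=tr(A)\div(tr(B)\,\$)^\bullet$, $tr(A\cdot B)=\times((tr(A)\,tr(B))^\bullet)$, and $tr(A_1,\dots,A_n\to A)=(tr(A_1)\dots tr(A_n))^\bullet\to tr(A)$. Then: (1) If $\mathrm{L}\vdash\Gamma\to C$, then $\mathrm{HL}\vdash tr(\Gamma\to C)$. (2) If $\mathrm{HL}\vdash G\to T$ is a derivable graph sequent all of whose types (the labels of edges of $G$ and the type $T$) belong to the image $tr(Tp(\mathrm{L}))$, then there exist a sequence of $\mathrm{L}$-types $\Gamma$ and an $\mathrm{L}$-type $C$ such that $G\to T=tr(\Gamma\to C)$ (in particular $G$ is a string graph) and $\mathrm{L}\vdash\Gamma\to C$.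
   Context: Lambek calculus $\mathrm{L}$: fix a countable set $Pr$ of primitive types. $Tp(\mathrm{L})$ is the least set containing $Pr$ and closed under $(B\backslash A)$, $(A/B)$, $(A\cdot B)$. A sequent is $\Gamma\to A$ with $\Gamma$ a nonempty finite sequence of types. The axioms are $p\to p$ ($p\in Pr$); the rules are (with $\Pi,\Psi$ nonempty, $\Gamma,\Delta$ possibly empty): from $\Pi\to A$ and $\Gamma,B,\Delta\to C$ infer $\Gamma,\Pi,A\backslash B,\Delta\to C$; from $A,\Pi\to B$ infer $\Pi\to A\backslash B$; from $\Gamma,A,B,\Delta\to C$ infer $\Gamma,A\cdot B,\Delta\to C$; from $\Pi\to A$ and $\Gamma,B,\Delta\to C$ infer $\Gamma,B/A,\Pi,\Delta\to C$; from $\Pi,A\to B$ infer $\Pi\to B/A$; from $\Pi\to A$ and $\Psi\to B$ infer $\Pi,\Psi\to A\cdot B$. Hypergraphs: given a label set $C$ with a function $type:C\to\mathbb{N}$, a hypergraph (graph) over $C$ is $G=\langle V,E,att,lab,ext\rangle$ with finite sets $V$ (nodes), $E$ (edges), $att:E\to V^\circledast$ (strings of pairwise distinct nodes), $lab:E\to C$ with $type(lab(e))=|att(e)|$, and $ext\in V^\circledast$ a string of pairwise distinct external nodes; $type(G)=|ext|$, $type(e)=|att(e)|$. Isomorphic graphs are identified. The handle $a^\bullet$ has nodes $v_1,\dots,v_n$, one edge labeled $a$ with $att=v_1\dots v_n$, and $ext=v_1\dots v_n$. The string graph $w^\bullet$ of $w=a_1\dots a_n$ ($n\ge1$) has nodes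 $v_0,\dots,v_n$, edges $e_1,\dots,e_n$ with $att(e_i)=v_{i-1}v_i$, $lab(e_i)=a_i$, and $ext=v_0v_n$. Hyperedge replacement $G[e/H]$ (when $type(e)=type(H)$): remove $e$, add a disjoint copy of $H$, and fuse the $i$-th external node of $H$ with the $i$-th attachment node of $e$; $G[e_1/H_1,\dots,e_k/H_k]$ denotes simultaneous replacement. $G[e:=a]$ denotes relabeling edge $e$ by $a$. $\mathrm{HL}$: fix a countable set $Pr$ of primitive types with $type:Pr\to\mathbb{N}$ such that infinitely many primitive types have each arity; a special symbol $\$$ may label edges of any arity. $Tp(\mathrm{HL})$ is the least set such that: $Pr\subseteq Tp(\mathrm{HL})$; if $N$ is a type and $D$ is a graph with exactly one edge $d_0$ labeled $\$$ and all other edges labeled by types, with $type(N)=type(D)$, then $N\div D$ is a type with $type(N\div D)=type_D(d_0)$; if $M$ is a graph whose edges are all labeled by types (possibly no edges), then $\times(M)$ is a type with $type(\times(M))=type(M)$. A graph sequent is $H\to A$ with $H$ a graph labeled by types, $A$ a type, $type(H)=type(A)$. Axioms: $p^\bullet\to p$, $p\in Pr$. Rules: $(\div\to)$: if $N\div D$ is a type with $E_D=\{d_0,\dots,d_k\}$, $lab(d_0)=\$$, and $e\in E_H$ is labeled $N$, then from $H\to A$, $H_1\to lab(d_1),\dots,H_k\to lab(d_k)$ infer $H[e/D][d_0:=N\div D][d_1/H_1,\dots,d_k/H_k]\to A$; $(\to\div)$: from $D[d_0/F]\to N$ infer $F\to N\div D$ (where $d_0$ is the $\$$-edge of $D$);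 $(\times\to)$: if $e\in E_G$ is labeled $\times(F)$, from $G[e/F]\to A$ infer $G\to A$; $(\to\times)$: if $E_M=\{m_1,\dots,m_l\}$ ($l\ge0$), from $H_1\to lab(m_1),\dots,H_l\to lab(m_l)$ infer $M[m_1/H_1,\dots,m_l/H_l]\to\times(M)$. $\mathrm{HL}\vdash H\to A$ means derivable from axioms by these rules. In the translation, primitive types of $\mathrm{L}$ are identified with primitive types of $\mathrm{HL}$ of type 2, and $(X\,Y)^\bullet$ is the string graph of a two-letter word where the $\$$-edge has type 2. *)

theory Defs
  imports Main
begin

text \<open>Primitive types are natural numbers.
  LBs B A stands for B\A, LSl A B stands for A/B, LPd A B stands for A*B.\<close>
datatype ltp = LPr nat | LBs ltp ltp | LSl ltp ltp | LPd ltp ltp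

inductive L_der :: "ltp list \<Rightarrow> ltp \<Rightarrow> bool" where
  L_ax: "L_der [LPr p] (LPr p)"
| L_bs_l: "\<Pi> \<noteq> [] \<Longrightarrow> L_der \<Pi> A \<Longrightarrow> L_der (\<Gamma> @ [B] @ \<Delta>) C
           \<Longrightarrow> L_der (\<Gamma> @ \<Pi> @ [LBs A B] @ \<Delta>) C"
| L_bs_r: "\<Pi> \<noteq> [] \<Longrightarrow> L_der (A # \<Pi>) B \<Longrightarrow> L_der \<Pi> (LBs A B)"
| L_pd_l: "L_der (\<Gamma> @ [A, B] @ \<Delta>) C \<Longrightarrow> L_der (\<Gamma> @ [LPd A B] @ \<Delta>) C"
| L_sl_l: "\<Pi> \<noteq> [] \<Longrightarrow> L_der \<Pi> A \<Longrightarrow> L_der (\<Gamma> @ [B] @ \<Delta>) C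
           \<Longrightarrow> L_der (\<Gamma> @ [LSl B A] @ \<Pi> @ \<Delta>) C"
| L_sl_r: "\<Pi> \<noteq> [] \<Longrightarrow> L_der (\<Pi> @ [A]) B \<Longrightarrow> L_der \<Pi> (LSl B A)"
| L_pd_r: "\<Pi> \<noteq> [] \<Longrightarrow> \<Psi> \<noteq> [] \<Longrightarrow> L_der \<Pi> A \<Longrightarrow> L_der \<Psi> B
           \<Longrightarrow> L_der (\<Pi> @ \<Psi>) (LPd A B)"

text \<open>A hypergraph: finite node set (of naturals), list of edges (label, attachment string),
  string of external nodes.  Edge identities are list positions.\<close>
datatype 'a hg = HG (hV: "nat set") (hE: "('a \<times> nat list) list") (hext: "nat list")

definition wf_hg :: "('a \<Rightarrow> nat list \<Rightarrow> bool) \<Rightarrow> 'a hg \<Rightarrow> bool" where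
  "wf_hg ok G \<longleftrightarrow> finite (hV G) \<and> distinct (hext G) \<and> set (hext G) \<subseteq> hV G \<and>
     (\<forall>x\<in>set (hE G). distinct (snd x) \<and> set (snd x) \<subseteq> hV G \<and> ok (fst x) (snd x))"

definition giso :: "('a \<Rightarrow> 'b \<Rightarrow> bool) \<Rightarrow> 'a hg \<Rightarrow> 'b hg \<Rightarrow> bool" where
  "giso R G H \<longleftrightarrow> (\<exists>f \<pi>. bij_betw f (hV G) (hV H) \<and>
      bij_betw \<pi> {..<length (hE G)} {..<length (hE H)} \<and>
      (\<forall>i<length (hE G). R (fst (hE G ! i)) (fst (hE H ! \<pi> i)) \<and>
                         map f (snd (hE G ! i)) = snd (hE H ! \<pi> i)) \<and>
      map f (hext G) = hext H)"

lemma giso_mono[mono]: "(\<And>x y. R x y \<longrightarrow> S x y) \<Longrightarrow> giso R G H \<longrightarrow> giso S G H"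
  unfolding giso_def by blast

lemma rel_option_mono'[mono]: "(\<And>x y. R x y \<longrightarrow> S x y) \<Longrightarrow> rel_option R a b \<longrightarrow> rel_option S a b"
  by (cases a; cases b) auto

text \<open>Hyperedge replacement G[i/H]: edge number i is removed, a disjoint copy of H is added
  (its internal nodes are shifted to fresh numbers), the j-th external node of H is fused with the
  j-th attachment node of the edge.\<close>
definition repl :: "'a hg \<Rightarrow> nat \<Rightarrow> 'a hg \<Rightarrow> 'a hg" where
  "repl G i H = (let att = snd (hE G ! i); s = Suc (Max (insert 0 (hV G)));
      fn = (\<lambda>v. case map_of (zip (hext H) att) v of Some u \<Rightarrow> u | None \<Rightarrow> s + v)
    in HG (hV G \<union> (\<lambda>v. s + v) ` (hV H - set (hext H)))
          (take i (hE G) @ drop (Suc i) (hE G) @ map (\<lambda>(l, a). (l, map fn a)) (hE H))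
          (hext G))"

text \<open>Simultaneous replacement G[i1/H1,...,ik/Hk] of the edges i with f i = Some H_i
  (edge numbers refer to G); performed in decreasing order of edge numbers.\<close>
definition repl_many :: "'a hg \<Rightarrow> (nat \<Rightarrow> 'a hg option) \<Rightarrow> 'a hg" where
  "repl_many G f = fold (\<lambda>i G'. case f i of None \<Rightarrow> G' | Some H \<Rightarrow> repl G' i H)
                        (rev [0..<length (hE G)]) G"

definition handle :: "'a \<Rightarrow> nat \<Rightarrow> 'a hg" where
  "handle a n = HG {0..<n} [(a, [0..<n])] [0..<n]"

definition string_graph :: "'a list \<Rightarrow> 'a hg" where
  "string_graph ws = HG {0..length ws} (map (\<lambda>i. (ws ! i, [i, Suc i])) [0..<length ws])
                        [0, length ws]"

text \<open>HPr a n: primitive type with name a and arity n.  HDiv N D: N \<div> D, where in D the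
  label None is the special symbol \$.  HTimes M: \<times>(M).\<close>
datatype htp = HPr nat nat | HDiv htp "htp option hg" | HTimes "htp hg"

fun tp_ar :: "htp \<Rightarrow> nat" where
  "tp_ar (HPr a n) = n"
| "tp_ar (HDiv N D) = (case filter (\<lambda>x. fst x = None) (hE D) of x # _ \<Rightarrow> length (snd x) | [] \<Rightarrow> 0)"
| "tp_ar (HTimes M) = length (hext M)"

definition ok_tp :: "htp \<Rightarrow> nat list \<Rightarrow> bool" where
  "ok_tp T a \<longleftrightarrow> length a = tp_ar T"

definition ok_opt :: "htp option \<Rightarrow> nat list \<Rightarrow> bool" where
  "ok_opt l a \<longleftrightarrow> (case l of None \<Rightarrow> True | Some T \<Rightarrow> length a = tp_ar T)"

inductive wf_tp :: "htp \<Rightarrow> bool" where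
  wf_pr: "wf_tp (HPr a n)"
| wf_div: "wf_tp N \<Longrightarrow> wf_hg ok_opt D \<Longrightarrow> length (filter (\<lambda>x. fst x = None) (hE D)) = 1 \<Longrightarrow>
           (\<forall>x\<in>set (hE D). \<forall>T. fst x = Some T \<longrightarrow> wf_tp T) \<Longrightarrow>
           tp_ar N = length (hext D) \<Longrightarrow> wf_tp (HDiv N D)"
| wf_times: "wf_hg ok_tp M \<Longrightarrow> (\<forall>x\<in>set (hE M). wf_tp (fst x)) \<Longrightarrow> wf_tp (HTimes M)"

text \<open>Equality of types up to isomorphism of the graphs occurring in them
  (isomorphic graphs are identified).\<close>
inductive teq :: "htp \<Rightarrow> htp \<Rightarrow> bool" where
  teq_pr: "teq (HPr a n) (HPr a n)"
| teq_div: "teq N N' \<Longrightarrow> giso (rel_option teq) D D' \<Longrightarrow> teq (HDiv N D) (HDiv N' D')"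
| teq_times: "giso teq M M' \<Longrightarrow> teq (HTimes M) (HTimes M')"

definition wf_seq :: "htp hg \<Rightarrow> htp \<Rightarrow> bool" where
  "wf_seq H A \<longleftrightarrow> wf_hg ok_tp H \<and> (\<forall>x\<in>set (hE H). wf_tp (fst x)) \<and> wf_tp A \<and>
                  length (hext H) = tp_ar A"

inductive HL_der :: "htp hg \<Rightarrow> htp \<Rightarrow> bool" where
  HL_ax: "HL_der (handle (HPr a n) n) (HPr a n)"
| HL_div_l: "wf_tp (HDiv N D) \<Longrightarrow> j0 < length (hE D) \<Longrightarrow> fst (hE D ! j0) = None \<Longrightarrow>
     HL_der H A \<Longrightarrow> i < length (hE H) \<Longrightarrow> fst (hE H ! i) = N \<Longrightarrow>
     (\<forall>j<length (hE D). j \<noteq> j0 \<longrightarrow> HL_der (Hs j) (the (fst (hE D ! j)))) \<Longrightarrow>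
     G = repl H i (map_hg the (repl_many
            (HG (hV D) ((hE D)[j0 := (Some (HDiv N D), snd (hE D ! j0))]) (hext D))
            (\<lambda>j. if j = j0 then None else Some (map_hg Some (Hs j))))) \<Longrightarrow>
     wf_seq G A \<Longrightarrow> HL_der G A"
| HL_div_r: "wf_tp (HDiv N D) \<Longrightarrow> j0 < length (hE D) \<Longrightarrow> fst (hE D ! j0) = None \<Longrightarrow>
     HL_der (map_hg the (repl D j0 (map_hg Some F))) N \<Longrightarrow>
     wf_seq F (HDiv N D) \<Longrightarrow> HL_der F (HDiv N D)"
| HL_times_l: "i < length (hE G) \<Longrightarrow> fst (hE G ! i) = HTimes F \<Longrightarrow>
     HL_der (repl G i F) A \<Longrightarrow> wf_seq G A \<Longrightarrow> HL_der G A"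
| HL_times_r: "wf_tp (HTimes M) \<Longrightarrow> (\<forall>j<length (hE M). HL_der (Hs j) (fst (hE M ! j))) \<Longrightarrow>
     G = repl_many M (\<lambda>j. Some (Hs j)) \<Longrightarrow> wf_seq G (HTimes M) \<Longrightarrow> HL_der G (HTimes M)"
| HL_iso: "HL_der H A \<Longrightarrow> giso teq H H' \<Longrightarrow> teq A A' \<Longrightarrow> wf_seq H' A' \<Longrightarrow> HL_der H' A'"

fun tr :: "ltp \<Rightarrow> htp" where
  "tr (LPr p) = HPr p 2"
| "tr (LSl A B) = HDiv (tr A) (string_graph [None, Some (tr B)])"
| "tr (LBs B A) = HDiv (tr A) (string_graph [Some (tr B), None])"
| "tr (LPd A B) = HTimes (string_graph [tr A, tr B])"

definition tr_seq :: "ltp list \<Rightarrow> ltp \<Rightarrow> htp hg \<times> htp" where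
  "tr_seq \<Gamma> C = (string_graph (map tr \<Gamma>), tr C)"

end

theory Submission
  imports Defs "HOL-Combinatorics.List_Permutation"
begin

definition pedges :: "nat list \<Rightarrow> 'a list \<Rightarrow> ('a \<times> nat list) list" where
  "pedges vs ys = map (\<lambda>q. (ys ! q, [vs ! q, vs ! Suc q])) [0..<length ys]"

definition is_path :: "'a hg \<Rightarrow> 'a list \<Rightarrow> nat list \<Rightarrow> bool" where
  "is_path G ys vs \<longleftrightarrow> distinct vs \<and> length vs = Suc (length ys) \<and> hV G = set vs \<and>
     mset (hE G) = mset (pedges vs ys) \<and> hext G = [hd vs, last vs]"

lemma length_pedges[simp]: "length (pedges vs ys) = length ys"
  by (simp add: pedges_def)

lemma pedges_nth: "q < length ys \<Longrightarrow> pedges vs ys ! q = (ys ! q, [vs ! q, vs ! Suc q])"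
  by (simp add: pedges_def)

lemma mem_pedges: "e \<in> set (pedges vs ys) \<longleftrightarrow> (\<exists>q<length ys. e = (ys ! q, [vs ! q, vs ! Suc q]))"
  by (auto simp: pedges_def)

lemma pedges_app:
  assumes "length V1 = length Y1"
  shows "pedges (V1 @ u # V2) (Y1 @ Y2) = pedges (V1 @ [u]) Y1 @ pedges (u # V2) Y2"
proof (rule nth_equalityI)
  fix q assume "q < length (pedges (V1 @ u # V2) (Y1 @ Y2))"
  then show "pedges (V1 @ u # V2) (Y1 @ Y2) ! q = (pedges (V1 @ [u]) Y1 @ pedges (u # V2) Y2) ! q"
    using assms
    by (auto simp: pedges_nth nth_append nth_Cons' Suc_diff_Suc not_less less_Suc_eq)
qed simp

lemma pedges_Cons2: "pedges (v # w # V) (y # Y) = (y, [v, w]) # pedges (w # V) Y"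
  by (rule nth_equalityI) (auto simp: pedges_nth nth_Cons')

lemma pedges_Nil[simp]: "pedges vs [] = []"
  by (simp add: pedges_def)

lemma pedges_map_nodes: "length vs = Suc (length ys) \<Longrightarrow>
  pedges (map f vs) ys = map (\<lambda>(l, a). (l, map f a)) (pedges vs ys)"
  by (rule nth_equalityI) (auto simp: pedges_nth)

lemma pedges_map_labels: "pedges vs (map g ys) = map (\<lambda>(l, a). (g l, a)) (pedges vs ys)"
  by (rule nth_equalityI) (auto simp: pedges_nth)

lemma hE_map_hg: "hE (map_hg g G) = map (\<lambda>(l, a). (g l, a)) (hE G)"
  by (cases G) (auto simp: map_prod_def)

lemma hV_map_hg[simp]: "hV (map_hg g G) = hV G"
  by (cases G) auto

lemma hext_map_hg[simp]: "hext (map_hg g G) = hext G"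
  by (cases G) auto

lemma is_path_map: "is_path G ys vs \<Longrightarrow> is_path (map_hg g G) (map g ys) vs"
  unfolding is_path_def hE_map_hg pedges_map_labels
  by (simp add: mset_map)

lemma string_is_path: "is_path (string_graph ys) ys [0..<Suc (length ys)]"
proof -
  have "map (\<lambda>i. (ys ! i, [i, Suc i])) [0..<length ys] = pedges [0..<Suc (length ys)] ys"
    by (rule nth_equalityI) (auto simp: pedges_nth simp del: upt_Suc)
  then show ?thesis
    unfolding is_path_def string_graph_def
    by (auto simp: atLeastAtMost_upt simp del: upt_Suc)
qed

lemma mset_bij_nth:
  assumes "bij_betw \<tau> {..<n} {..<length xs}"
  shows "mset (map (\<lambda>q. xs ! \<tau> q) [0..<n]) = mset xs"
proof -
  have inj: "inj_on \<tau> {..<n}" using assms bij_betw_def by blast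
  have "mset (map (\<lambda>q. xs ! \<tau> q) [0..<n]) = image_mset (nth xs) (image_mset \<tau> (mset_set {..<n}))"
    by (simp add: mset_upt lessThan_atLeast0 multiset.map_comp o_def)
  also have "image_mset \<tau> (mset_set {..<n}) = mset_set {..<length xs}"
    using image_mset_mset_set[OF inj] assms by (simp add: bij_betw_def)
  also have "image_mset (nth xs) (mset_set {..<length xs}) = mset (map (nth xs) [0..<length xs])"
    by (simp add: mset_upt lessThan_atLeast0)
  also have "map (nth xs) [0..<length xs] = xs" by (rule map_nth)
  finally show ?thesis .
qed

lemma bij_lessThan_eq: "bij_betw \<pi> {..<n::nat} {..<m} \<Longrightarrow> n = m"
  by (drule bij_betw_same_card) (simp add: card_lessThan)

lemma path_giso:
  assumes G: "is_path G ys vs" and H: "is_path H zs ws" and R: "list_all2 R ys zs"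
  shows "giso R G H"
proof -
  have len: "length zs = length ys" "length ws = length vs"
    using R G H list_all2_lengthD unfolding is_path_def by force+
  obtain \<sigma>G where sG: "bij_betw \<sigma>G {..<length (hE G)} {..<length (pedges vs ys)}"
     "\<forall>i<length (hE G). hE G ! i = pedges vs ys ! \<sigma>G i"
    using permutation_Ex_bij[of "hE G" "pedges vs ys"] G unfolding is_path_def by blast
  obtain \<sigma>H where sH: "bij_betw \<sigma>H {..<length (pedges ws zs)} {..<length (hE H)}"
     "\<forall>i<length (pedges ws zs). pedges ws zs ! i = hE H ! \<sigma>H i"
    using permutation_Ex_bij[of "pedges ws zs" "hE H"] H unfolding is_path_def by metis
  define f where "f = (\<lambda>v. the (map_of (zip vs ws) v))"
  have dv: "distinct vs" and dw: "distinct ws" using G H unfolding is_path_def by auto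
  have fq: "f (vs ! q) = ws ! q" if "q < length vs" for q
    using map_of_zip_nth[of vs ws q] that dv len by (simp add: f_def)
  have mapf: "map f vs = ws"
    by (rule nth_equalityI) (auto simp: len fq)
  have injf: "inj_on f (set vs)"
  proof (rule inj_onI)
    fix x y assume "x \<in> set vs" "y \<in> set vs" "f x = f y"
    then obtain p q where "p < length vs" "q < length vs" "x = vs ! p" "y = vs ! q"
      by (auto simp: in_set_conv_nth)
    with \<open>f x = f y\<close> fq dw len show "x = y" by (simp add: nth_eq_iff_index_eq)
  qed
  have bijf: "bij_betw f (hV G) (hV H)"
    using G H injf mapf unfolding is_path_def bij_betw_def by (metis list.set_map)
  have bijp: "bij_betw (\<sigma>H \<circ> \<sigma>G) {..<length (hE G)} {..<length (hE H)}"
    using sG(1) sH(1) len by (auto intro: bij_betw_trans)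
  have nev: "vs \<noteq> []" using G unfolding is_path_def by auto
  show ?thesis unfolding giso_def
  proof (intro exI conjI allI impI)
    show "bij_betw f (hV G) (hV H)" by (rule bijf)
    show "bij_betw (\<sigma>H \<circ> \<sigma>G) {..<length (hE G)} {..<length (hE H)}" by (rule bijp)
  next
    fix i assume i: "i < length (hE G)"
    define q where "q = \<sigma>G i"
    have q: "q < length ys" using sG(1) i unfolding q_def bij_betw_def by auto
    have e1: "hE G ! i = (ys ! q, [vs ! q, vs ! Suc q])" using sG(2) i q by (simp add: q_def pedges_nth)
    have e2: "hE H ! (\<sigma>H \<circ> \<sigma>G) i = (zs ! q, [ws ! q, ws ! Suc q])"
      using sH(2) q len by (simp add: q_def pedges_nth)
    have "length vs = Suc (length ys)" using G unfolding is_path_def by auto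
    then show "R (fst (hE G ! i)) (fst (hE H ! (\<sigma>H \<circ> \<sigma>G) i))"
      "map f (snd (hE G ! i)) = snd (hE H ! (\<sigma>H \<circ> \<sigma>G) i)"
      using e1 e2 q R fq by (auto simp: list_all2_conv_all_nth)
  next
    have "map f [hd vs, last vs] = [hd ws, last ws]"
      using mapf nev by (metis hd_map last_map list.simps(8,9))
    then show "map f (hext G) = hext H" using G H unfolding is_path_def by simp
  qed
qed

lemma giso_path:
  assumes g: "giso R G H" and G: "is_path G ys vs"
  shows "\<exists>ys' vs'. is_path H ys' vs' \<and> list_all2 R ys ys'"
proof -
  obtain f \<pi> where f: "bij_betw f (hV G) (hV H)"
    and p: "bij_betw \<pi> {..<length (hE G)} {..<length (hE H)}"
    and e: "\<forall>i<length (hE G). R (fst (hE G ! i)) (fst (hE H ! \<pi> i)) \<and>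
                         map f (snd (hE G ! i)) = snd (hE H ! \<pi> i)"
    and x: "map f (hext G) = hext H"
    using g unfolding giso_def by blast
  obtain \<sigma> where s: "bij_betw \<sigma> {..<length (pedges vs ys)} {..<length (hE G)}"
     "\<forall>i<length (pedges vs ys). pedges vs ys ! i = hE G ! \<sigma> i"
    using permutation_Ex_bij[of "pedges vs ys" "hE G"] G unfolding is_path_def by metis
  define ys' where "ys' = map (\<lambda>q. fst (hE H ! \<pi> (\<sigma> q))) [0..<length ys]"
  have lv: "length vs = Suc (length ys)" using G unfolding is_path_def by auto
  have sq: "\<sigma> q < length (hE G)" if "q < length ys" for q using s(1) that unfolding bij_betw_def by auto
  have eq: "pedges (map f vs) ys' = map (\<lambda>q. hE H ! (\<pi> \<circ> \<sigma>) q) [0..<length ys]"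
  proof (rule nth_equalityI)
    fix q assume "q < length (pedges (map f vs) ys')"
    then have q: "q < length ys" by (simp add: ys'_def)
    have "pedges vs ys ! q = hE G ! \<sigma> q" using s(2) q by simp
    then have "snd (hE G ! \<sigma> q) = [vs ! q, vs ! Suc q]" using q by (metis pedges_nth snd_conv)
    then have "snd (hE H ! \<pi> (\<sigma> q)) = [f (vs ! q), f (vs ! Suc q)]" using e sq[OF q] by auto
    then show "pedges (map f vs) ys' ! q = map (\<lambda>q. hE H ! (\<pi> \<circ> \<sigma>) q) [0..<length ys] ! q"
      using q lv by (simp add: pedges_nth ys'_def prod_eq_iff)
  qed (simp add: ys'_def)
  have bt: "bij_betw (\<pi> \<circ> \<sigma>) {..<length ys} {..<length (hE H)}"
    using s(1) p by (auto intro: bij_betw_trans)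
  have m: "mset (hE H) = mset (pedges (map f vs) ys')"
    using mset_bij_nth[OF bt] eq by simp
  have dv: "distinct vs" "hV G = set vs" using G unfolding is_path_def by auto
  have "distinct (map f vs)" using f dv unfolding bij_betw_def by (simp add: distinct_map)
  moreover have "hV H = set (map f vs)" using f dv unfolding bij_betw_def by simp
  moreover have "hext H = [hd (map f vs), last (map f vs)]"
    using x G lv unfolding is_path_def by (cases vs) (auto simp: last_map)
  moreover have "list_all2 R ys ys'"
  proof -
    have "R (ys ! q) (ys' ! q)" if q: "q < length ys" for q
    proof -
      have "pedges vs ys ! q = hE G ! \<sigma> q" using s(2) q by simp
      then have "fst (hE G ! \<sigma> q) = ys ! q" using q by (metis pedges_nth fst_conv)
      then show ?thesis using e sq[OF q] q by (auto simp: ys'_def)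
    qed
    then show ?thesis by (auto simp: list_all2_conv_all_nth ys'_def)
  qed
  ultimately have "is_path H ys' (map f vs) \<and> list_all2 R ys ys'"
    using m lv by (simp add: is_path_def ys'_def)
  then show ?thesis by blast
qed

lemma giso_sym:
  assumes g: "giso R G H"
    and wa: "\<forall>e\<in>set (hE G). set (snd e) \<subseteq> hV G" and wx: "set (hext G) \<subseteq> hV G"
  shows "giso (conversep R) H G"
proof -
  obtain f \<pi> where f: "bij_betw f (hV G) (hV H)"
    and p: "bij_betw \<pi> {..<length (hE G)} {..<length (hE H)}"
    and e: "\<forall>i<length (hE G). R (fst (hE G ! i)) (fst (hE H ! \<pi> i)) \<and>
                         map f (snd (hE G ! i)) = snd (hE H ! \<pi> i)"
    and x: "map f (hext G) = hext H"
    using g unfolding giso_def by blast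
  define f' where "f' = inv_into (hV G) f"
  define \<pi>' where "\<pi>' = inv_into {..<length (hE G)} \<pi>"
  have injf: "inj_on f (hV G)" using f bij_betw_def by blast
  have mf: "map f' (map f xs) = xs" if "set xs \<subseteq> hV G" for xs
    using that injf by (induct xs) (auto simp: f'_def)
  show ?thesis unfolding giso_def
  proof (intro exI conjI allI impI)
    show "bij_betw f' (hV H) (hV G)" using f by (simp add: f'_def bij_betw_inv_into)
    show "bij_betw \<pi>' {..<length (hE H)} {..<length (hE G)}" using p by (simp add: \<pi>'_def bij_betw_inv_into)
  next
    fix j assume j: "j < length (hE H)"
    have i: "\<pi>' j < length (hE G)" using p j unfolding \<pi>'_def
      by (metis bij_betw_def bij_betw_inv_into lessThan_iff bij_betwE)
    have pj: "\<pi> (\<pi>' j) = j" using p j unfolding \<pi>'_def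
      by (metis bij_betw_def f_inv_into_f lessThan_iff)
    show "conversep R (fst (hE H ! j)) (fst (hE G ! \<pi>' j))" using e i pj by force
    have "snd (hE H ! j) = map f (snd (hE G ! \<pi>' j))" using e i pj by force
    moreover have "set (snd (hE G ! \<pi>' j)) \<subseteq> hV G" using wa i by auto
    ultimately show "map f' (snd (hE H ! j)) = snd (hE G ! \<pi>' j)" using mf by simp
  next
    show "map f' (hext H) = hext G" using x mf[OF wx] by simp
  qed
qed

lemma giso_comp:
  assumes "giso R G H" "giso S H K"
  shows "giso (R OO S) G K"
proof -
  obtain f \<pi> where f: "bij_betw f (hV G) (hV H)"
    and p: "bij_betw \<pi> {..<length (hE G)} {..<length (hE H)}"
    and e: "\<forall>i<length (hE G). R (fst (hE G ! i)) (fst (hE H ! \<pi> i)) \<and>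
                         map f (snd (hE G ! i)) = snd (hE H ! \<pi> i)"
    and x: "map f (hext G) = hext H"
    using assms(1) unfolding giso_def by blast
  obtain g \<rho> where g: "bij_betw g (hV H) (hV K)"
    and r: "bij_betw \<rho> {..<length (hE H)} {..<length (hE K)}"
    and e2: "\<forall>i<length (hE H). S (fst (hE H ! i)) (fst (hE K ! \<rho> i)) \<and>
                         map g (snd (hE H ! i)) = snd (hE K ! \<rho> i)"
    and x2: "map g (hext H) = hext K"
    using assms(2) unfolding giso_def by blast
  show ?thesis unfolding giso_def
  proof (intro exI conjI allI impI)
    show "bij_betw (g \<circ> f) (hV G) (hV K)" using f g by (rule bij_betw_trans)
    show "bij_betw (\<rho> \<circ> \<pi>) {..<length (hE G)} {..<length (hE K)}" using p r by (rule bij_betw_trans)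
  next
    fix i assume i: "i < length (hE G)"
    then have pi: "\<pi> i < length (hE H)" using p bij_betwE by fastforce
    show "(R OO S) (fst (hE G ! i)) (fst (hE K ! (\<rho> \<circ> \<pi>) i))" using e e2 i pi by auto
    show "map (g \<circ> f) (snd (hE G ! i)) = snd (hE K ! (\<rho> \<circ> \<pi>) i)" using e e2 i pi by (simp flip: map_map)
  next
    show "map (g \<circ> f) (hext G) = hext K" using x x2 by (simp flip: map_map)
  qed
qed

lemma giso_refl: "(\<And>e. e \<in> set (hE G) \<Longrightarrow> R (fst e) (fst e)) \<Longrightarrow> giso R G G"
  unfolding giso_def
  by (rule exI[of _ id], rule exI[of _ id]) (auto simp: bij_betw_def)

lemma path_unique:
  assumes G1: "is_path G ys vs" and G2: "is_path G ys' vs'"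
  shows "ys = ys' \<and> vs = vs'"
proof -
  have d: "distinct vs" "distinct vs'" and s: "set vs = set vs'"
    and m: "mset (pedges vs ys) = mset (pedges vs' ys')"
    and l: "length vs = Suc (length ys)" "length vs' = Suc (length ys')"
    and h: "hd vs = hd vs'" "last vs = last vs'"
    using G1 G2 unfolding is_path_def by auto
  have lv: "length vs = length vs'" using d s distinct_card by metis
  then have ly: "length ys = length ys'" using l by simp
  have "vs \<noteq> []" "vs' \<noteq> []" using l by auto
  then have v0: "vs ! 0 = vs' ! 0" using h by (simp add: hd_conv_nth)
  have key: "q \<le> length ys \<Longrightarrow> vs ! q = vs' ! q \<and> (q < length ys \<longrightarrow> ys ! q = ys' ! q)" for q
  proof (induct q)
    case 0
    have "ys ! 0 = ys' ! 0" if q0: "0 < length ys"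
    proof -
      have "pedges vs ys ! 0 \<in> set (pedges vs' ys')"
        using m q0 by (metis length_pedges nth_mem set_mset_mset)
      then obtain q' where q': "q' < length ys'" "(ys ! 0, [vs ! 0, vs ! Suc 0]) = (ys' ! q', [vs' ! q', vs' ! Suc q'])"
        using q0 by (auto simp: mem_pedges pedges_nth)
      have "vs' ! q' = vs' ! 0" using q' v0 by simp
      then have "q' = 0" using d(2) l(2) q'(1) by (simp add: nth_eq_iff_index_eq)
      then show ?thesis using q' by simp
    qed
    then show ?case using v0 by simp
  next
    case (Suc q)
    then have q: "q < length ys" by simp
    have "pedges vs ys ! q \<in> set (pedges vs' ys')"
      using m q by (metis length_pedges nth_mem set_mset_mset)
    then obtain q' where q': "q' < length ys'" "(ys ! q, [vs ! q, vs ! Suc q]) = (ys' ! q', [vs' ! q', vs' ! Suc q'])"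
      using q by (auto simp: mem_pedges pedges_nth)
    have vq: "vs ! q = vs' ! q" using Suc by simp
    have "vs' ! q' = vs' ! q" using q' vq by simp
    then have "q' = q" using d(2) l(2) q'(1) q ly by (simp add: nth_eq_iff_index_eq)
    then have vs1: "vs ! Suc q = vs' ! Suc q" using q' by simp
    have "ys ! Suc q = ys' ! Suc q" if q1: "Suc q < length ys"
    proof -
      have "pedges vs ys ! Suc q \<in> set (pedges vs' ys')"
        using m q1 by (metis length_pedges nth_mem set_mset_mset)
      then obtain p where p: "p < length ys'" "(ys ! Suc q, [vs ! Suc q, vs ! Suc (Suc q)]) = (ys' ! p, [vs' ! p, vs' ! Suc p])"
        using q1 by (auto simp: mem_pedges pedges_nth)
      have "vs' ! p = vs' ! Suc q" using p vs1 by simp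
      then have "p = Suc q" using d(2) l(2) p(1) q1 ly by (simp add: nth_eq_iff_index_eq)
      then show ?thesis using p by simp
    qed
    then show ?case using vs1 by simp
  qed
  have "vs = vs'" by (rule nth_equalityI) (use lv l key in \<open>auto simp: less_Suc_eq_le\<close>)
  moreover have "ys = ys'" by (rule nth_equalityI) (use ly key in auto)
  ultimately show ?thesis by simp
qed

lemma giso_paths:
  assumes "giso R G H" "is_path G ys vs" "is_path H zs ws"
  shows "list_all2 R ys zs"
  using giso_path[OF assms(1,2)] path_unique assms(3) by metis

lemma fst_set_hg: "e \<in> set (hE G) \<Longrightarrow> fst e \<in> set_hg G"
  by (cases G) (auto intro: hg.set_intros fsts.intros)

lemma giso_restrict: "giso R G H \<Longrightarrow> giso (\<lambda>a b. R a b \<and> a \<in> fst ` set (hE G)) G H"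
  unfolding giso_def by (metis image_eqI nth_mem)

lemma teq_refl: "teq T T"
proof (induct T)
  case (HPr a n) then show ?case by (rule teq_pr)
next
  case (HDiv N D)
  have "giso (rel_option teq) D D"
  proof (rule giso_refl)
    fix e assume e: "e \<in> set (hE D)"
    show "rel_option teq (fst e) (fst e)"
    proof (cases "fst e")
      case (Some T)
      then have "Some T \<in> set_hg D" using e fst_set_hg by fastforce
      then show ?thesis using HDiv Some by auto
    qed simp
  qed
  then show ?case using HDiv by (intro teq_div)
next
  case (HTimes M)
  have "giso teq M M"
  proof (rule giso_refl)
    fix e assume e: "e \<in> set (hE M)"
    then have "fst e \<in> set_hg M" using fst_set_hg by fastforce
    then show "teq (fst e) (fst e)" using HTimes by auto
  qed
  then show ?case by (intro teq_times)
qed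

lemma teq_trans: "teq x y \<Longrightarrow> teq y z \<Longrightarrow> teq x z"
proof (induct x y arbitrary: z rule: teq.induct)
  case (teq_pr a n) then show ?case by simp
next
  case (teq_div N N' D D')
  from teq_div(4) obtain N'' D'' where z: "z = HDiv N'' D''" "teq N' N''"
     "giso (rel_option teq) D' D''" by (cases rule: teq.cases) auto
  have "giso (rel_option (\<lambda>x1 x2. teq x1 x2 \<and> (\<forall>z. teq x2 z \<longrightarrow> teq x1 z)) OO rel_option teq) D D''"
    using giso_comp teq_div(3) z(3) by blast
  then have "giso (rel_option teq) D D''"
    by (rule giso_mono[rule_format, rotated])
       (auto simp: option.rel_sel elim!: option.rel_cases)
  then show ?case using z teq_div by (auto intro: teq.teq_div)
next
  case (teq_times M M')
  from teq_times(2) obtain M'' where z: "z = HTimes M''" "giso teq M' M''"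
    by (cases rule: teq.cases) auto
  have "giso ((\<lambda>x1 x2. teq x1 x2 \<and> (\<forall>z. teq x2 z \<longrightarrow> teq x1 z)) OO teq) M M''"
    using giso_comp teq_times(1) z(2) by blast
  then have "giso teq M M''"
    by (rule giso_mono[rule_format, rotated]) auto
  then show ?case using z by (auto intro: teq.teq_times)
qed

lemma teq_sym: "teq x y \<Longrightarrow> wf_tp x \<Longrightarrow> teq y x"
proof (induct x y rule: teq.induct)
  case (teq_pr a n) then show ?case by (simp add: teq.teq_pr)
next
  case (teq_div N N' D D')
  from teq_div(4) have w: "wf_tp N" "wf_hg ok_opt D" "\<forall>x\<in>set (hE D). \<forall>T. fst x = Some T \<longrightarrow> wf_tp T"
    by (auto elim: wf_tp.cases)
  have "giso (\<lambda>a b. rel_option (\<lambda>x1 x2. teq x1 x2 \<and> (wf_tp x1 \<longrightarrow> teq x2 x1)) a b \<and> a \<in> fst ` set (hE D)) D D'"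
    using giso_restrict teq_div(3) by blast
  then have "giso (conversep (\<lambda>a b. rel_option (\<lambda>x1 x2. teq x1 x2 \<and> (wf_tp x1 \<longrightarrow> teq x2 x1)) a b \<and> a \<in> fst ` set (hE D))) D' D"
    using w(2) by (intro giso_sym) (auto simp: wf_hg_def)
  then have "giso (rel_option teq) D' D"
    by (rule giso_mono[rule_format, rotated])
       (use w(3) in \<open>auto simp: option.rel_sel elim!: option.rel_cases\<close>)
  then show ?case using teq_div w by (auto intro: teq.teq_div)
next
  case (teq_times M M')
  from teq_times(2) have w: "wf_hg ok_tp M" "\<forall>x\<in>set (hE M). wf_tp (fst x)"
    by (auto elim: wf_tp.cases)
  have "giso (\<lambda>a b. (teq a b \<and> (wf_tp a \<longrightarrow> teq b a)) \<and> a \<in> fst ` set (hE M)) M M'"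
    using giso_restrict teq_times(1) by blast
  then have "giso (conversep (\<lambda>a b. (teq a b \<and> (wf_tp a \<longrightarrow> teq b a)) \<and> a \<in> fst ` set (hE M))) M' M"
    using w(1) by (intro giso_sym) (auto simp: wf_hg_def)
  then have "giso teq M' M"
    by (rule giso_mono[rule_format, rotated]) (use w(2) in auto)
  then show ?case by (auto intro: teq.teq_times)
qed

lemma string2: "string_graph [a, b] = HG {0..2} [(a, [0, 1]), (b, [1, 2])] [0, 2]"
  by (simp add: string_graph_def upt_rec numeral_2_eq_2)

lemma string1: "string_graph [a] = handle a 2"
  by (simp add: string_graph_def handle_def upt_rec numeral_2_eq_2 atLeastLessThanSuc_atLeastAtMost)

lemma tr_ar[simp]: "tp_ar (tr A) = 2"
  by (cases A) (auto simp: string2)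

lemma tr_wf: "wf_tp (tr A)"
proof (induct A)
  case (LPr x) then show ?case by (simp add: wf_pr)
next
  case (LBs B A) then show ?case
    by (auto intro!: wf_div simp: string2 wf_hg_def ok_opt_def)
next
  case (LSl A B) then show ?case
    by (auto intro!: wf_div simp: string2 wf_hg_def ok_opt_def)
next
  case (LPd A B) then show ?case
    by (auto intro!: wf_times simp: string2 wf_hg_def ok_tp_def)
qed

lemma teq_tr_cases:
  assumes "teq X (tr A)"
  obtains (pr) p where "A = LPr p" "X = HPr p 2"
  | (sl) A1 B1 N D where "A = LSl A1 B1" "X = HDiv N D" "teq N (tr A1)"
        "giso (rel_option teq) D (string_graph [None, Some (tr B1)])"
  | (bs) A1 B1 N D where "A = LBs B1 A1" "X = HDiv N D" "teq N (tr A1)"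
        "giso (rel_option teq) D (string_graph [Some (tr B1), None])"
  | (pd) A1 B1 M where "A = LPd A1 B1" "X = HTimes M" "giso teq M (string_graph [tr A1, tr B1])"
  using assms by (cases A) (auto elim: teq.cases)

lemma tr_inj: "teq (tr A) (tr B) \<Longrightarrow> A = B"
proof (induct A arbitrary: B)
  case (LPr x) then show ?case by (cases B) (auto elim: teq.cases)
next
  case (LBs A1 A2)
  from LBs(3) show ?case
  proof (cases rule: teq_tr_cases)
    case (bs B2 B1 N D)
    have "giso (rel_option teq) (string_graph [Some (tr A1), None]) (string_graph [Some (tr B1), None])"
      using bs LBs(3) by (auto elim: teq.cases)
    then have "list_all2 (rel_option teq) [Some (tr A1), None] [Some (tr B1), None]"
      by (rule giso_paths[OF _ string_is_path string_is_path])
    then show ?thesis using bs LBs by (auto elim: teq.cases)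
  next
    case (sl B1 B2 N D)
    have "giso (rel_option teq) (string_graph [Some (tr A1), None]) (string_graph [None, Some (tr B2)])"
      using sl LBs(3) by (auto elim: teq.cases)
    then have "list_all2 (rel_option teq) [Some (tr A1), None] [None, Some (tr B2)]"
      by (rule giso_paths[OF _ string_is_path string_is_path])
    then show ?thesis by simp
  qed auto
next
  case (LSl A1 A2)
  from LSl(3) show ?case
  proof (cases rule: teq_tr_cases)
    case (sl B1 B2 N D)
    have "giso (rel_option teq) (string_graph [None, Some (tr A2)]) (string_graph [None, Some (tr B2)])"
      using sl LSl(3) by (auto elim: teq.cases)
    then have "list_all2 (rel_option teq) [None, Some (tr A2)] [None, Some (tr B2)]"
      by (rule giso_paths[OF _ string_is_path string_is_path])
    then show ?thesis using sl LSl by (auto elim: teq.cases)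
  next
    case (bs B2 B1 N D)
    have "giso (rel_option teq) (string_graph [None, Some (tr A2)]) (string_graph [Some (tr B1), None])"
      using bs LSl(3) by (auto elim: teq.cases)
    then have "list_all2 (rel_option teq) [None, Some (tr A2)] [Some (tr B1), None]"
      by (rule giso_paths[OF _ string_is_path string_is_path])
    then show ?thesis by simp
  qed auto
next
  case (LPd A1 A2)
  from LPd(3) show ?case
  proof (cases rule: teq_tr_cases)
    case (pd B1 B2 M)
    have "giso teq (string_graph [tr A1, tr A2]) (string_graph [tr B1, tr B2])"
      using pd LPd(3) by (auto elim: teq.cases)
    then have "list_all2 teq [tr A1, tr A2] [tr B1, tr B2]"
      by (rule giso_paths[OF _ string_is_path string_is_path])
    then show ?thesis using pd LPd by auto
  qed auto
qed

lemma HL_wf: "HL_der G T \<Longrightarrow> wf_seq G T"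
  by (erule HL_der.cases) (simp_all add: wf_seq_def wf_hg_def handle_def ok_tp_def wf_pr)

lemma path_wf:
  assumes "is_path G ys vs"
  shows "finite (hV G)" "set (hext G) \<subseteq> hV G" "\<forall>e\<in>set (hE G). distinct (snd e) \<and> set (snd e) \<subseteq> hV G \<and> length (snd e) = 2"
    "ys \<noteq> [] \<Longrightarrow> distinct (hext G)"
proof -
  have d: "distinct vs" "length vs = Suc (length ys)" "hV G = set vs" "set (hE G) = set (pedges vs ys)"
      "hext G = [hd vs, last vs]"
    using assms unfolding is_path_def by (auto dest: arg_cong[of _ _ set_mset])
  show "finite (hV G)" using d by simp
  show "set (hext G) \<subseteq> hV G" using d by (cases vs) auto
  show "\<forall>e\<in>set (hE G). distinct (snd e) \<and> set (snd e) \<subseteq> hV G \<and> length (snd e) = 2"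
    using d by (auto simp: mem_pedges nth_eq_iff_index_eq)
  assume "ys \<noteq> []"
  then have "hd vs \<noteq> last vs" using d by (cases vs) (auto simp: hd_conv_nth last_conv_nth nth_eq_iff_index_eq)
  then show "distinct (hext G)" using d by simp
qed

lemma path_wf_seq:
  assumes "is_path G ys vs" "ys \<noteq> []" "\<forall>y\<in>set ys. \<exists>A. y = tr A" "wf_tp T" "tp_ar T = 2"
  shows "wf_seq G T"
proof -
  have s: "set (hE G) = set (pedges vs ys)" using assms(1) unfolding is_path_def by (metis set_mset_mset)
  have l: "\<forall>e\<in>set (hE G). \<exists>A. fst e = tr A"
    using assms(3) s by (auto simp: mem_pedges)
  have w: "\<forall>e\<in>set (hE G). wf_tp (fst e) \<and> tp_ar (fst e) = 2" using l tr_wf by fastforce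
  have "length (hext G) = 2" using assms(1) unfolding is_path_def by simp
  then show ?thesis using path_wf[OF assms(1)] assms(2,4,5) w unfolding wf_seq_def wf_hg_def ok_tp_def
    by simp
qed

lemma mset_remove_nth: "i < length E \<Longrightarrow> mset E = mset (take i E @ drop (Suc i) E) + {#E ! i#}"
  by (subst id_take_nth_drop[of i E]) auto

lemma repl_parts:
  "hV (repl G i H) = hV G \<union> (+) (Suc (Max (insert 0 (hV G)))) ` (hV H - set (hext H))"
  "hE (repl G i H) = take i (hE G) @ drop (Suc i) (hE G) @
      map (\<lambda>(l, a). (l, map (\<lambda>v. case map_of (zip (hext H) (snd (hE G ! i))) v of
          None \<Rightarrow> Suc (Max (insert 0 (hV G))) + v | Some u \<Rightarrow> u) a)) (hE H)"
  "hext (repl G i H) = hext G"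
  by (simp_all add: repl_def Let_def)

lemma Max_bound: "finite A \<Longrightarrow> v \<in> A \<Longrightarrow> v < Suc (Max (insert 0 A))"
  by (simp add: le_imp_less_Suc)

lemma pedges_split3: "length V1 = length X1 \<Longrightarrow>
   pedges (V1 @ a # b # V2) (X1 @ x # X2) = pedges (V1 @ [a]) X1 @ (x, [a, b]) # pedges (b # V2) X2"
  by (simp add: pedges_app pedges_Cons2)

lemma repl_fwd:
  assumes G: "is_path G (X1 @ x # X2) (V1 @ a # b # V2)" and lV: "length V1 = length X1"
    and i: "i < length (hE G)" "hE G ! i = (x, [a, b])"
    and H: "is_path H ys ws" and ne: "ys \<noteq> []"
  shows "is_path (repl G i H) (X1 @ ys @ X2)
     (V1 @ a # map ((+) (Suc (Max (insert 0 (hV G))))) (butlast (tl ws)) @ b # V2)"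
proof -
  define s where "s = Suc (Max (insert 0 (hV G)))"
  have lw: "length ws = Suc (length ys)" and dw: "distinct ws" and hw: "hext H = [hd ws, last ws]"
    and VH: "hV H = set ws" and mH: "mset (hE H) = mset (pedges ws ys)"
    using H unfolding is_path_def by auto
  obtain w0 mid wl where ws: "ws = w0 # mid @ [wl]"
  proof -
    have "ws \<noteq> []" using lw by auto
    have "tl ws \<noteq> []" using lw ne by (cases ws; cases ys) auto
    then have "ws = hd ws # butlast (tl ws) @ [last (tl ws)]" by (cases ws) auto
    then show ?thesis using that by blast
  qed
  have bt: "butlast (tl ws) = mid" using ws by simp
  have dG: "distinct (V1 @ a # b # V2)" and VG: "hV G = set (V1 @ a # b # V2)"
    and mG: "mset (hE G) = mset (pedges (V1 @ a # b # V2) (X1 @ x # X2))"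
    and xG: "hext G = [hd (V1 @ a # b # V2), last (V1 @ a # b # V2)]"
    and lG: "length (V1 @ a # b # V2) = Suc (length (X1 @ x # X2))"
    using G unfolding is_path_def by auto
  have finG: "finite (hV G)" using VG by simp
  have big: "v < s + m" if "v \<in> hV G" for v m using Max_bound[OF finG that] s_def by simp
  have dw': "w0 \<noteq> wl" "w0 \<notin> set mid" "wl \<notin> set mid" "distinct mid" using dw ws by auto
  define fn where "fn = (\<lambda>v. case map_of (zip (hext H) (snd (hE G ! i))) v of None \<Rightarrow> s + v | Some u \<Rightarrow> u)"
  have fn0: "fn w0 = a" and fnl: "fn wl = b" and fnm: "\<And>m. m \<in> set mid \<Longrightarrow> fn m = s + m"
    using dw' hw ws i(2) by (auto simp: fn_def)
  have mapfn: "map fn ws = a # map ((+) s) mid @ [b]"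
    using ws fn0 fnl fnm by simp
  define mid' where "mid' = map ((+) s) mid"
  have lmid: "length (a # mid') = length ys" using lw ws by (simp add: mid'_def)
  have e1: "hE (repl G i H) = take i (hE G) @ drop (Suc i) (hE G) @ map (\<lambda>(l, a). (l, map fn a)) (hE H)"
    unfolding repl_parts fn_def s_def by (rule refl)
  have "mset (map (\<lambda>(l, a). (l, map fn a)) (hE H)) = mset (map (\<lambda>(l, a). (l, map fn a)) (pedges ws ys))"
    using mH by (metis mset_map)
  also have "map (\<lambda>(l, a). (l, map fn a)) (pedges ws ys) = pedges (map fn ws) ys"
    using pedges_map_nodes[OF lw] by simp
  finally have mHm: "mset (map (\<lambda>(l, a). (l, map fn a)) (hE H)) = mset (pedges (a # mid' @ [b]) ys)"
    using mapfn by (simp add: mid'_def)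
  have newp: "pedges (V1 @ a # mid' @ b # V2) (X1 @ ys @ X2) =
      pedges (V1 @ [a]) X1 @ pedges (a # mid' @ [b]) ys @ pedges (b # V2) X2"
  proof -
    have "pedges (V1 @ a # (mid' @ b # V2)) (X1 @ (ys @ X2)) = pedges (V1 @ [a]) X1 @ pedges (a # mid' @ b # V2) (ys @ X2)"
      using lV by (rule pedges_app)
    moreover have "pedges ((a # mid') @ b # V2) (ys @ X2) = pedges ((a # mid') @ [b]) ys @ pedges (b # V2) X2"
      using lmid by (rule pedges_app)
    ultimately show ?thesis by simp
  qed
  have mE: "mset (hE (repl G i H)) = mset (pedges (V1 @ a # mid' @ b # V2) (X1 @ ys @ X2))"
  proof -
    have "mset (hE G) = mset (take i (hE G) @ drop (Suc i) (hE G)) + {#(x, [a, b])#}"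
      using mset_remove_nth[OF i(1)] i(2) by simp
    moreover have "mset (hE G) = mset (pedges (V1 @ [a]) X1) + {#(x, [a, b])#} + mset (pedges (b # V2) X2)"
      using mG pedges_split3[OF lV] by simp
    ultimately have "mset (take i (hE G) @ drop (Suc i) (hE G)) + {#(x, [a, b])#} = mset (pedges (V1 @ [a]) X1) + mset (pedges (b # V2) X2) + {#(x, [a, b])#}"
      by (simp add: ac_simps)
    then have "mset (take i (hE G) @ drop (Suc i) (hE G)) = mset (pedges (V1 @ [a]) X1) + mset (pedges (b # V2) X2)"
      by (simp only: add_right_cancel)
    then show ?thesis using e1 newp mHm by simp
  qed
  have "hV H - set (hext H) = set mid" using VH hw ws dw' by auto
  then have vR: "hV (repl G i H) = set (V1 @ a # mid' @ b # V2)"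
    using VG by (auto simp: repl_parts s_def mid'_def)
  have dR: "distinct (V1 @ a # mid' @ b # V2)"
  proof -
    have "set mid' \<inter> hV G = {}" using big by (auto simp: mid'_def)
    moreover have "distinct mid'" using dw' by (simp add: mid'_def distinct_map)
    ultimately show ?thesis using dG VG by auto
  qed
  have xR: "hext (repl G i H) = [hd (V1 @ a # mid' @ b # V2), last (V1 @ a # mid' @ b # V2)]"
    using xG by (simp add: repl_parts hd_append)
  have "length (V1 @ a # mid' @ b # V2) = Suc (length (X1 @ ys @ X2))"
    using lG lmid by simp
  then show ?thesis using mE vR dR xR bt unfolding is_path_def s_def mid'_def by simp
qed

lemma split_at2: "Suc q < length ys \<Longrightarrow> ys = take q ys @ ys ! q # ys ! Suc q # drop (Suc (Suc q)) ys"
  by (metis Cons_nth_drop_Suc append_take_drop_id Suc_lessD)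

lemma mset_map_inj:
  assumes "inj_on g A" "set xs \<subseteq> A" "set ys \<subseteq> A" "mset (map g xs) = mset (map g ys)"
  shows "mset xs = mset ys"
proof -
  have "map (inv_into A g) (map g xs) = xs" using assms(1,2) by (induct xs) auto
  moreover have "map (inv_into A g) (map g ys) = ys" using assms(1,3) by (induct ys) auto
  moreover have "mset (map (inv_into A g) (map g xs)) = mset (map (inv_into A g) (map g ys))"
    using assms(4) by (metis mset_map)
  ultimately show ?thesis by simp
qed

lemma path_from_image:
  assumes inj: "inj_on fn (hV F)" and img: "fn ` hV F = set vs0"
    and mF: "mset (map (\<lambda>(l, a). (l, map fn a)) (hE F)) = mset (pedges vs0 ys')"
    and wF: "\<forall>e\<in>set (hE F). set (snd e) \<subseteq> hV F" "hext F = [e0, e1]" "e0 \<in> hV F" "e1 \<in> hV F"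
       "fn e0 = hd vs0" "fn e1 = last vs0"
    and d: "distinct vs0" "length vs0 = Suc (length ys')"
  shows "is_path F ys' (map (inv_into (hV F) fn) vs0)"
proof -
  define h where "h = inv_into (hV F) fn"
  define vs' where "vs' = map h vs0"
  have mv: "map fn vs' = vs0"
  proof -
    have "\<forall>v\<in>set vs0. fn (h v) = v" using img unfolding h_def by (metis f_inv_into_f)
    then show ?thesis unfolding vs'_def by (induct vs0) auto
  qed
  have sv: "set vs' = hV F" unfolding vs'_def h_def using img inj
    by (metis inv_into_image_cancel list.set_map order_refl)
  have dv: "distinct vs'" using mv d(1) by (metis distinct_map)
  have lv: "length vs' = Suc (length ys')" using d(2) by (simp add: vs'_def)
  have pe: "pedges vs0 ys' = map (\<lambda>(l, a). (l, map fn a)) (pedges vs' ys')"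
    using pedges_map_nodes[OF lv, of fn] mv by simp
  have "set (pedges vs' ys') \<subseteq> {e. set (snd e) \<subseteq> hV F}"
    using lv by (auto simp: mem_pedges sv[symmetric] intro!: nth_mem)
  moreover have "set (hE F) \<subseteq> {e. set (snd e) \<subseteq> hV F}" using wF(1) by auto
  moreover have "inj_on (\<lambda>(l, a). (l, map fn a)) {e. set (snd e) \<subseteq> hV F}"
  proof (rule inj_onI)
    fix e e' assume e: "e \<in> {e. set (snd e) \<subseteq> hV F}" "e' \<in> {e. set (snd e) \<subseteq> hV F}"
      and eq: "(\<lambda>(l, a). (l, map fn a)) e = (\<lambda>(l, a). (l, map fn a)) e'"
    have "inj_on fn (set (snd e) \<union> set (snd e'))" using inj e by (auto intro: inj_on_subset)
    then show "e = e'" using eq by (cases e; cases e') (auto simp: inj_on_map_eq_map)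
  qed
  ultimately have me: "mset (hE F) = mset (pedges vs' ys')"
    using mset_map_inj mF pe by metis
  have ne: "vs0 \<noteq> []" using d(2) by auto
  have "hd vs' = e0" using ne wF(3,5) inj by (simp add: vs'_def h_def hd_map) (metis inv_into_f_f)
  moreover have "last vs' = e1" using ne wF(4,6) inj by (simp add: vs'_def h_def last_map) (metis inv_into_f_f)
  ultimately show ?thesis using me sv dv lv wF(2) unfolding is_path_def vs'_def h_def by simp
qed

lemma repl_inv_times:
  assumes R: "is_path (repl G i F) ys vs" and F: "is_path F [a, b] [w0, w1, w2]"
    and i: "i < length (hE G)" "snd (hE G ! i) = [x, y]"
    and wG: "finite (hV G)" "set (hext G) \<subseteq> hV G" "\<forall>e\<in>set (hE G). set (snd e) \<subseteq> hV G"
  shows "\<exists>Y1 Y2 V1 V2. ys = Y1 @ a # b # Y2 \<and> length V1 = length Y1 \<and>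
           is_path G (Y1 @ fst (hE G ! i) # Y2) (V1 @ x # y # V2)"
proof -
  define s where "s = Suc (Max (insert 0 (hV G)))"
  define m where "m = s + w1"
  have dF: "distinct [w0, w1, w2]" and VF: "hV F = {w0, w1, w2}" and xF: "hext F = [w0, w2]"
    and mF: "mset (hE F) = mset [(a, [w0, w1]), (b, [w1, w2])]"
    using F unfolding is_path_def by (auto simp: pedges_Cons2)
  have mG: "m \<notin> hV G" using Max_bound[OF wG(1)] by (auto simp: m_def s_def)
  define fn where "fn = (\<lambda>v. case map_of (zip (hext F) (snd (hE G ! i))) v of None \<Rightarrow> s + v | Some u \<Rightarrow> u)"
  have fn: "fn w0 = x" "fn w2 = y" "fn w1 = m" using dF xF i(2) by (auto simp: fn_def m_def)
  define rem where "rem = take i (hE G) @ drop (Suc i) (hE G)"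
  have eR: "hE (repl G i F) = rem @ map (\<lambda>(l, a). (l, map fn a)) (hE F)"
    unfolding repl_parts fn_def s_def rem_def by (simp only: append_assoc)
  have "mset (map (\<lambda>(l, a). (l, map fn a)) (hE F)) = mset (map (\<lambda>(l, a). (l, map fn a)) [(a, [w0, w1]), (b, [w1, w2])])"
    using mF by (metis mset_map)
  then have mFm: "mset (map (\<lambda>(l, a). (l, map fn a)) (hE F)) = {#(a, [x, m]), (b, [m, y])#}"
    using fn by simp
  have mR: "mset (pedges vs ys) = mset rem + {#(a, [x, m]), (b, [m, y])#}"
    using R eR mFm unfolding is_path_def by simp
  have dv: "distinct vs" and lv: "length vs = Suc (length ys)" and VR: "hV (repl G i F) = set vs"
    and xR: "hext (repl G i F) = [hd vs, last vs]" using R unfolding is_path_def by auto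
  have "(a, [x, m]) \<in># mset (pedges vs ys)" using mR by simp
  then have "(a, [x, m]) \<in> set (pedges vs ys)" by simp
  then obtain q where q: "q < length ys" "a = ys ! q" "x = vs ! q" "m = vs ! Suc q"
    by (auto simp: mem_pedges)
  have "(b, [m, y]) \<in># mset (pedges vs ys)" using mR by simp
  then have "(b, [m, y]) \<in> set (pedges vs ys)" by simp
  then obtain q' where q': "q' < length ys" "b = ys ! q'" "m = vs ! q'" "y = vs ! Suc q'"
    by (auto simp: mem_pedges)
  have "vs ! q' = vs ! Suc q" using q(4) q'(3) by simp
  then have "q' = Suc q" using q(1) q'(1) dv lv by (simp add: nth_eq_iff_index_eq)
  define Y1 Y2 V1 V2 where "Y1 = take q ys" "Y2 = drop (Suc (Suc q)) ys" "V1 = take q vs" "V2 = drop (Suc (Suc (Suc q))) vs"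
  have ys: "ys = Y1 @ a # b # Y2"
  proof -
    have "Suc q < length ys" using q'(1) \<open>q' = Suc q\<close> by simp
    then have "ys = take q ys @ ys ! q # ys ! Suc q # drop (Suc (Suc q)) ys" by (rule split_at2)
    then show ?thesis using q(2) q'(2) \<open>q' = Suc q\<close> unfolding Y1_Y2_V1_V2_def by simp
  qed
  have vs: "vs = V1 @ x # m # y # V2"
  proof -
    have "Suc (Suc q) < length vs" using q' \<open>q' = Suc q\<close> lv by simp
    then have "vs = take q vs @ vs ! q # vs ! Suc q # drop (Suc (Suc q)) vs" using split_at2[of q vs] by simp
    moreover have "drop (Suc (Suc q)) vs = vs ! Suc (Suc q) # drop (Suc (Suc (Suc q))) vs"
      using \<open>Suc (Suc q) < length vs\<close> by (simp add: Cons_nth_drop_Suc)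
    ultimately show ?thesis using q(3,4) q'(4) \<open>q' = Suc q\<close> unfolding Y1_Y2_V1_V2_def by simp
  qed
  have lV: "length V1 = length Y1" using q lv by (simp add: Y1_Y2_V1_V2_def)
  have pe: "pedges vs ys = pedges (V1 @ [x]) Y1 @ (a, [x, m]) # (b, [m, y]) # pedges (y # V2) Y2"
    using ys vs pedges_split3[OF lV, of x m "y # V2" a "b # Y2"] by (simp add: pedges_Cons2)
  have mrem: "mset rem = mset (pedges (V1 @ [x]) Y1) + mset (pedges (y # V2) Y2)"
    using mR pe by (simp add: add_mset_commute)
  obtain X where X: "hE G ! i = (X, [x, y])" using i(2) by (metis prod.collapse)
  have "mset (hE G) = mset rem + {#(X, [x, y])#}" using mset_remove_nth[OF i(1)] X by (simp add: rem_def)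
  then have mGn: "mset (hE G) = mset (pedges (V1 @ x # y # V2) (Y1 @ X # Y2))"
    using mrem pedges_split3[OF lV] by simp
  have VR2: "set vs = hV G \<union> {m}"
  proof -
    have "hV F - set (hext F) = {w1}" using VF xF dF by auto
    then show ?thesis using VR by (simp add: repl_parts s_def m_def)
  qed
  have VG: "hV G = set (V1 @ x # y # V2)" using VR2 mG dv vs by auto
  have dG: "distinct (V1 @ x # y # V2)" using dv vs by auto
  have xG: "hext G = [hd (V1 @ x # y # V2), last (V1 @ x # y # V2)]"
    using xR vs by (simp add: repl_parts hd_append)
  have "length (V1 @ x # y # V2) = Suc (length (Y1 @ X # Y2))" using lv ys vs by simp
  then have "is_path G (Y1 @ X # Y2) (V1 @ x # y # V2)"
    using VG dG xG mGn unfolding is_path_def by simp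
  then show ?thesis using ys lV X by fastforce
qed

lemma repl_fn_facts:
  assumes "hext F = [e0, e1]" "e0 \<noteq> e1" "snd (hE G ! i) = [g0, g1]" "g0 \<noteq> g1"
    "g0 \<in> hV G" "g1 \<in> hV G" "finite (hV G)"
    and fn_def: "fn = (\<lambda>v. case map_of (zip (hext F) (snd (hE G ! i))) v of None \<Rightarrow> Suc (Max (insert 0 (hV G))) + v | Some u \<Rightarrow> u)"
  shows "fn e0 = g0" "fn e1 = g1" "\<And>v. v \<noteq> e0 \<Longrightarrow> v \<noteq> e1 \<Longrightarrow> fn v = Suc (Max (insert 0 (hV G))) + v"
    "inj_on fn A"
    "fn ` A = (if e0 \<in> A then {g0} else {}) \<union> (if e1 \<in> A then {g1} else {}) \<union> (+) (Suc (Max (insert 0 (hV G)))) ` (A - {e0, e1})"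
proof -
  show f0: "fn e0 = g0" and f1: "fn e1 = g1" using assms by (auto simp: fn_def)
  show f2: "\<And>v. v \<noteq> e0 \<Longrightarrow> v \<noteq> e1 \<Longrightarrow> fn v = Suc (Max (insert 0 (hV G))) + v"
    using assms by (auto simp: fn_def)
  have big: "g0 < Suc (Max (insert 0 (hV G)))" "g1 < Suc (Max (insert 0 (hV G)))"
    using Max_bound assms by auto
  have v: "fn v = (if v = e0 then g0 else if v = e1 then g1 else Suc (Max (insert 0 (hV G))) + v)" for v
    using f0 f1 f2 by auto
  show "inj_on fn A"
  proof (rule inj_onI)
    fix x y assume "x \<in> A" "y \<in> A" "fn x = fn y"
    then show "x = y" using big assms(2,4) by (simp add: v split: if_splits)
  qed
  show "fn ` A = (if e0 \<in> A then {g0} else {}) \<union> (if e1 \<in> A then {g1} else {}) \<union> (+) (Suc (Max (insert 0 (hV G)))) ` (A - {e0, e1})"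
  proof (intro equalityI subsetI)
    fix z assume "z \<in> fn ` A"
    then show "z \<in> (if e0 \<in> A then {g0} else {}) \<union> (if e1 \<in> A then {g1} else {}) \<union> (+) (Suc (Max (insert 0 (hV G)))) ` (A - {e0, e1})"
      using assms(2) by (auto simp: v)
  next
    fix z assume z: "z \<in> (if e0 \<in> A then {g0} else {}) \<union> (if e1 \<in> A then {g1} else {}) \<union> (+) (Suc (Max (insert 0 (hV G)))) ` (A - {e0, e1})"
    show "z \<in> fn ` A"
    proof (cases "e0 \<in> A \<and> z = g0")
      case True then show ?thesis using f0 by (metis image_eqI)
    next
      case False
      show ?thesis
      proof (cases "e1 \<in> A \<and> z = g1")
        case True then show ?thesis using f1 by (metis image_eqI)
      next
        case False2: False
        then obtain x where "x \<in> A - {e0, e1}" "z = Suc (Max (insert 0 (hV G))) + x"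
          using z False by (auto split: if_splits)
        then show ?thesis using f2 by (metis DiffD1 DiffD2 image_eqI insertCI)
      qed
    qed
  qed
qed

lemma path2_edges:
  assumes "is_path G [u, b] [g0, g1, g2]"
  shows "mset (hE G) = {#(u, [g0, g1]), (b, [g1, g2])#}" "hV G = {g0, g1, g2}" "hext G = [g0, g2]"
     "distinct [g0, g1, g2]"
  using assms unfolding is_path_def by (auto simp: pedges_Cons2)

lemma repl_inv_sl:
  assumes R: "is_path (repl G i F) ys vs" and G: "is_path G [u, b] [g0, g1, g2]"
    and i: "i < length (hE G)" "hE G ! i = (u, [g0, g1])"
    and wF: "distinct (hext F)" "length (hext F) = 2" "set (hext F) \<subseteq> hV F"
       "\<forall>e\<in>set (hE F). set (snd e) \<subseteq> hV F"
  shows "\<exists>ys'. ys = ys' @ [b] \<and> ys' \<noteq> [] \<and> (\<exists>vs'. is_path F ys' vs')"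
proof -
  note Gf = path2_edges[OF G]
  obtain e0 e1 where xF: "hext F = [e0, e1]" using wF(2)
    by (cases "hext F" rule: list.exhaust; cases "tl (hext F)") (auto simp: numeral_2_eq_2 length_Suc_conv)
  have ne: "e0 \<noteq> e1" using wF(1) xF by simp
  define s where "s = Suc (Max (insert 0 (hV G)))"
  define fn where "fn = (\<lambda>v. case map_of (zip (hext F) (snd (hE G ! i))) v of None \<Rightarrow> Suc (Max (insert 0 (hV G))) + v | Some u \<Rightarrow> u)"
  have pre: "snd (hE G ! i) = [g0, g1]" "g0 \<noteq> g1" "g0 \<in> hV G" "g1 \<in> hV G" "finite (hV G)"
    using i(2) Gf by auto
  note ff = repl_fn_facts[OF xF ne pre fn_def]
  have ff1: "fn e0 = g0" "fn e1 = g1" "inj_on fn (hV F)"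
     "fn ` hV F = {g0, g1} \<union> (+) s ` (hV F - {e0, e1})"
    using ff(1,2,4) ff(5)[of "hV F"] wF(3) xF by (simp_all add: s_def insert_commute)
  define rem where "rem = take i (hE G) @ drop (Suc i) (hE G)"
  have eR: "hE (repl G i F) = rem @ map (\<lambda>(l, a). (l, map fn a)) (hE F)"
    unfolding repl_parts fn_def rem_def by (simp only: append_assoc)
  have mrem: "mset rem = {#(b, [g1, g2])#}"
    using mset_remove_nth[OF i(1)] i(2) Gf(1) by (simp add: rem_def)
  have dv: "distinct vs" and lv: "length vs = Suc (length ys)" and VR: "hV (repl G i F) = set vs"
    and xR: "hext (repl G i F) = [hd vs, last vs]" and mR: "mset (hE (repl G i F)) = mset (pedges vs ys)"
    using R unfolding is_path_def by auto
  have "mset (hE (repl G i F)) = add_mset (b, [g1, g2]) (mset (map (\<lambda>(l, a). (l, map fn a)) (hE F)))"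
    using eR mrem by simp
  then have "(b, [g1, g2]) \<in># mset (pedges vs ys)" using mR by (metis union_single_eq_member)
  then obtain q where q: "q < length ys" "b = ys ! q" "g1 = vs ! q" "g2 = vs ! Suc q"
    by (auto simp: mem_pedges)
  have xx: "hd vs = g0" "last vs = g2" using xR Gf(3) by (simp_all add: repl_parts)
  have "vs \<noteq> []" using lv by auto
  then have "last vs = vs ! length ys" using lv by (simp add: last_conv_nth)
  then have "vs ! Suc q = vs ! length ys" using xx q by simp
  then have sq: "Suc q = length ys" using dv lv q(1) by (simp add: nth_eq_iff_index_eq)
  define ys' vs0 where "ys' = take q ys" "vs0 = take (Suc q) vs"
  have "ys = take (Suc q) ys" using sq by simp
  also have "\<dots> = take q ys @ [ys ! q]" using q(1) by (simp add: take_Suc_conv_app_nth)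
  finally have ys: "ys = ys' @ [b]" using q(2) unfolding ys'_vs0_def by simp
  have "vs = take (Suc (Suc q)) vs" using sq lv by simp
  also have "\<dots> = take (Suc q) vs @ [vs ! Suc q]" by (rule take_Suc_conv_app_nth) (use sq lv in simp)
  finally have vs: "vs = vs0 @ [g2]" using q(4) unfolding ys'_vs0_def by simp
  have lv0: "length vs0 = Suc (length ys')" using lv sq by (simp add: ys'_vs0_def)
  have lq: "length (take q vs) = length ys'" using lv q by (simp add: ys'_vs0_def)
  have vs0: "vs0 = take q vs @ [vs ! q]" using lv q unfolding ys'_vs0_def by (simp add: take_Suc_conv_app_nth)
  have "pedges vs ys = pedges (take q vs @ vs ! q # [g2]) (ys' @ [b])" using vs vs0 ys by simp
  also have "\<dots> = pedges vs0 ys' @ [(b, [g1, g2])]"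
    using pedges_app[OF lq, of "vs ! q" "[g2]" "[b]"] vs0 q(3) by (simp add: pedges_Cons2)
  finally have "mset (pedges vs ys) = mset (pedges vs0 ys') + {#(b, [g1, g2])#}" by simp
  then have mF: "mset (map (\<lambda>(l, a). (l, map fn a)) (hE F)) = mset (pedges vs0 ys')"
    using mR eR mrem by simp
  have "set vs = {g0, g1, g2} \<union> (+) s ` (hV F - {e0, e1})"
    using VR Gf(2) xF by (auto simp: repl_parts s_def)
  moreover have "g2 \<notin> (+) s ` (hV F - {e0, e1})"
    using Max_bound[of "hV G" g2] Gf(2) by (auto simp: s_def)
  moreover have "set vs0 = set vs - {g2}" using dv vs by auto
  ultimately have "set vs0 = fn ` hV F" using ff1(4) Gf(4) by auto
  moreover have "ys' \<noteq> []"
  proof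
    assume "ys' = []"
    then have "q = 0" using sq ys by simp
    then show False using xx q(3) Gf(4) \<open>vs \<noteq> []\<close> by (cases vs) auto
  qed
  moreover have "hd vs0 = g0" using xx vs lv0 by (cases vs0) auto
  moreover have "last vs0 = g1" using vs0 q(3) by simp
  moreover have "distinct vs0" using dv vs by simp
  ultimately have "is_path F ys' (map (inv_into (hV F) fn) vs0)"
    using path_from_image[OF ff1(3) _ mF wF(4) xF _ _ _ _ _ lv0] ff1 wF(3) xF by auto
  then show ?thesis using ys \<open>ys' \<noteq> []\<close> by blast
qed

lemma repl_inv_bs:
  assumes R: "is_path (repl G i F) ys vs" and G: "is_path G [b, u] [g0, g1, g2]"
    and i: "i < length (hE G)" "hE G ! i = (u, [g1, g2])"
    and wF: "distinct (hext F)" "length (hext F) = 2" "set (hext F) \<subseteq> hV F"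
       "\<forall>e\<in>set (hE F). set (snd e) \<subseteq> hV F"
  shows "\<exists>ys'. ys = b # ys' \<and> ys' \<noteq> [] \<and> (\<exists>vs'. is_path F ys' vs')"
proof -
  note Gf = path2_edges[OF G]
  obtain e0 e1 where xF: "hext F = [e0, e1]" using wF(2)
    by (cases "hext F" rule: list.exhaust; cases "tl (hext F)") (auto simp: numeral_2_eq_2 length_Suc_conv)
  have ne: "e0 \<noteq> e1" using wF(1) xF by simp
  define s where "s = Suc (Max (insert 0 (hV G)))"
  define fn where "fn = (\<lambda>v. case map_of (zip (hext F) (snd (hE G ! i))) v of None \<Rightarrow> Suc (Max (insert 0 (hV G))) + v | Some u \<Rightarrow> u)"
  have pre: "snd (hE G ! i) = [g1, g2]" "g1 \<noteq> g2" "g1 \<in> hV G" "g2 \<in> hV G" "finite (hV G)"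
    using i(2) Gf by auto
  note ff = repl_fn_facts[OF xF ne pre fn_def]
  have ff1: "fn e0 = g1" "fn e1 = g2" "inj_on fn (hV F)"
     "fn ` hV F = {g1, g2} \<union> (+) s ` (hV F - {e0, e1})"
    using ff(1,2,4) ff(5)[of "hV F"] wF(3) xF by (simp_all add: s_def insert_commute)
  define rem where "rem = take i (hE G) @ drop (Suc i) (hE G)"
  have eR: "hE (repl G i F) = rem @ map (\<lambda>(l, a). (l, map fn a)) (hE F)"
    unfolding repl_parts fn_def rem_def by (simp only: append_assoc)
  have mrem: "mset rem = {#(b, [g0, g1])#}"
    using mset_remove_nth[OF i(1)] i(2) Gf(1) by (simp add: rem_def)
  have dv: "distinct vs" and lv: "length vs = Suc (length ys)" and VR: "hV (repl G i F) = set vs"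
    and xR: "hext (repl G i F) = [hd vs, last vs]" and mR: "mset (hE (repl G i F)) = mset (pedges vs ys)"
    using R unfolding is_path_def by auto
  have "mset (hE (repl G i F)) = add_mset (b, [g0, g1]) (mset (map (\<lambda>(l, a). (l, map fn a)) (hE F)))"
    using eR mrem by simp
  then have "(b, [g0, g1]) \<in># mset (pedges vs ys)" using mR by (metis union_single_eq_member)
  then obtain q where q: "q < length ys" "b = ys ! q" "g0 = vs ! q" "g1 = vs ! Suc q"
    by (auto simp: mem_pedges)
  have xx: "hd vs = g0" "last vs = g2" using xR Gf(3) by (simp_all add: repl_parts)
  have nv: "vs \<noteq> []" using lv by auto
  then have "vs ! q = vs ! 0" using xx q by (simp add: hd_conv_nth)
  then have q0: "q = 0" using dv lv q(1) by (simp add: nth_eq_iff_index_eq)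
  define ys' vs0 where "ys' = tl ys" "vs0 = tl vs"
  have ys: "ys = b # ys'" using q q0 unfolding ys'_vs0_def by (cases ys) auto
  have vs: "vs = g0 # vs0" using q q0 nv unfolding ys'_vs0_def by (cases vs) auto
  have lv0: "length vs0 = Suc (length ys')" using lv q(1) by (simp add: ys'_vs0_def)
  have "g1 = vs0 ! 0" using q(4) q0 nv unfolding ys'_vs0_def by (cases vs) auto
  moreover have "vs0 \<noteq> []" using lv0 by auto
  ultimately obtain r where vs0: "vs0 = g1 # r" by (cases vs0) auto
  have "pedges vs ys = (b, [g0, g1]) # pedges vs0 ys'" using vs vs0 ys by (simp add: pedges_Cons2)
  then have "mset (pedges vs ys) = mset (pedges vs0 ys') + {#(b, [g0, g1])#}" by simp
  then have mF: "mset (map (\<lambda>(l, a). (l, map fn a)) (hE F)) = mset (pedges vs0 ys')"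
    using mR eR mrem by simp
  have "set vs = {g0, g1, g2} \<union> (+) s ` (hV F - {e0, e1})"
    using VR Gf(2) xF by (auto simp: repl_parts s_def)
  moreover have "g0 \<notin> (+) s ` (hV F - {e0, e1})"
    using Max_bound[of "hV G" g0] Gf(2) by (auto simp: s_def)
  moreover have "set vs0 = set vs - {g0}" using dv vs by auto
  ultimately have "set vs0 = fn ` hV F" using ff1(4) Gf(4) by auto
  moreover have "ys' \<noteq> []"
  proof
    assume "ys' = []"
    then have "vs0 = [g1]" using lv0 vs0 by simp
    then show False using xx vs Gf(4) by simp
  qed
  moreover have "hd vs0 = g1" using vs0 by simp
  moreover have "last vs0 = g2" using xx vs vs0 by simp
  moreover have "distinct vs0" using dv vs by simp
  ultimately have "is_path F ys' (map (inv_into (hV F) fn) vs0)"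
    using path_from_image[OF ff1(3) _ mF wF(4) xF _ _ _ _ _ lv0] ff1 wF(3) xF by auto
  then show ?thesis using ys \<open>ys' \<noteq> []\<close> by blast
qed

lemma labels_repl: "fst ` set (hE (repl G i H)) = fst ` set (take i (hE G) @ drop (Suc i) (hE G)) \<union> fst ` set (hE H)"
proof -
  have h: "fst \<circ> (\<lambda>(l, a). (l, map f a)) = fst" for f :: "nat \<Rightarrow> nat"
    by (auto split: prod.splits)
  show ?thesis by (simp add: repl_parts image_Un image_comp h Un_assoc)
qed

lemma nth_in_rem: "k < length E \<Longrightarrow> k \<noteq> i \<Longrightarrow> E ! k \<in> set (take i E @ drop (Suc i) E)"
proof -
  assume a: "k < length E" "k \<noteq> i"
  show ?thesis
  proof (cases "k < i")
    case True
    then have "take i E ! k = E ! k" "k < length (take i E)" using a by auto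
    then show ?thesis by (metis in_set_conv_nth UnI1 set_append)
  next
    case False
    then have "drop (Suc i) E ! (k - Suc i) = E ! k" "k - Suc i < length (drop (Suc i) E)" using a by auto
    then show ?thesis by (metis in_set_conv_nth UnI2 set_append)
  qed
qed

lemma rem_sub: "set (take i E @ drop (Suc i) E) \<subseteq> set E"
  by (auto dest: in_set_takeD in_set_dropD)

lemma path_labels: "is_path G ys vs \<Longrightarrow> fst ` set (hE G) = set ys"
proof -
  assume p: "is_path G ys vs"
  then have "set (hE G) = set (pedges vs ys)" unfolding is_path_def by (metis set_mset_mset)
  moreover have "map fst (pedges vs ys) = ys"
    by (rule nth_equalityI) (auto simp: pedges_nth)
  then have "fst ` set (pedges vs ys) = set ys" by (metis set_map)
  ultimately show ?thesis by simp
qed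

lemma giso_labels: "giso R G H \<Longrightarrow> e \<in> set (hE G) \<Longrightarrow> \<exists>e'\<in>set (hE H). R (fst e) (fst e')"
proof -
  assume g: "giso R G H" and e: "e \<in> set (hE G)"
  obtain f \<pi> where p: "bij_betw \<pi> {..<length (hE G)} {..<length (hE H)}"
    and r: "\<forall>i<length (hE G). R (fst (hE G ! i)) (fst (hE H ! \<pi> i))"
    using g unfolding giso_def by blast
  obtain i where i: "i < length (hE G)" "e = hE G ! i" using e by (auto simp: in_set_conv_nth)
  then have "\<pi> i < length (hE H)" using p by (auto dest: bij_betwE)
  then show ?thesis using r i by (metis nth_mem)
qed

lemma map_hg_repl: "i < length (hE G) \<Longrightarrow> map_hg g (repl G i H) = repl (map_hg g G) i (map_hg g H)"
proof -
  assume i: "i < length (hE G)"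
  have s: "snd (map (\<lambda>(l, y). (g l, y)) (hE G) ! i) = snd (hE G ! i)" using i by (simp split: prod.splits)
  show ?thesis
    by (rule hg.expand) (simp only: repl_parts hE_map_hg hV_map_hg hext_map_hg s, simp add: take_map drop_map split: prod.splits)
qed

lemma map_hg_the_Some: "map_hg the (map_hg Some F) = F"
  by (simp add: hg.map_comp o_def hg.map_ident)

lemma mset2: "mset xs = {#a, b#} \<Longrightarrow> xs = [a, b] \<or> xs = [b, a]"
proof -
  assume m: "mset xs = {#a, b#}"
  then have "size (mset xs) = 2" by simp
  then have "length xs = 2" by simp
  then obtain x y where xs: "xs = [x, y]"
    by (auto simp: length_Suc_conv numeral_2_eq_2)
  have "add_mset x {#y#} = add_mset a {#b#}" using m xs by simp
  then have "(x = a \<and> y = b) \<or> (x = b \<and> y = a)" by (simp add: add_eq_conv_ex) blast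
  then show ?thesis using xs by auto
qed

lemma two_edges:
  assumes "is_path D [l0, l1] [g0, g1, g2]"
  shows "hE D = [(l0, [g0, g1]), (l1, [g1, g2])] \<or> hE D = [(l1, [g1, g2]), (l0, [g0, g1])]"
  by (rule mset2[OF path2_edges(1)[OF assms]])

lemma repl_many2:
  assumes "length (hE G) = 2" "j0 < 2"
  shows "repl_many G (\<lambda>j. if j = j0 then None else Some (K j)) = repl G (1 - j0) (K (1 - j0))"
proof -
  have r: "rev [0..<length (hE G)] = [1, 0]" using assms(1) by (simp add: numeral_2_eq_2)
  show ?thesis using assms(2) unfolding repl_many_def r by (cases "j0 = 0") auto
qed

lemma repl_many2': "length (hE G) = 2 \<Longrightarrow> repl_many G (\<lambda>j. Some (K j)) = repl (repl G 1 (K 1)) 0 (K 0)"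
proof -
  assume "length (hE G) = 2"
  then have r: "rev [0..<length (hE G)] = [1, 0]" by (simp add: numeral_2_eq_2)
  show ?thesis unfolding repl_many_def r by simp
qed

lemma list_all2_tr: "list_all2 P ys (map tr \<Gamma>) \<longleftrightarrow> list_all2 (\<lambda>y A. P y (tr A)) ys \<Gamma>"
  by (simp add: list_all2_map2)

lemma L_ne: "L_der \<Gamma> C \<Longrightarrow> \<Gamma> \<noteq> []"
  by (induct rule: L_der.induct) auto

lemma teq_tr_same: "teq x (tr A) \<Longrightarrow> teq x (tr B) \<Longrightarrow> wf_tp x \<Longrightarrow> A = B"
proof -
  assume a: "teq x (tr A)" and b: "teq x (tr B)" and w: "wf_tp x"
  have "teq (tr A) x" using teq_sym[OF a w] .
  then have "teq (tr A) (tr B)" using b by (rule teq_trans)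
  then show "A = B" by (rule tr_inj)
qed

lemma string_fwd:
  assumes H: "is_path H ys ws" "ys \<noteq> []" and k: "k < length xs"
  shows "\<exists>vs. is_path (repl (string_graph xs) k H) (take k xs @ ys @ drop (Suc k) xs) vs"
proof -
  have p: "is_path (string_graph xs) xs [0..<Suc (length xs)]" by (rule string_is_path)
  have xs: "xs = take k xs @ xs ! k # drop (Suc k) xs" using k by (simp add: id_take_nth_drop)
  have vs: "[0..<Suc (length xs)] = [0..<k] @ k # Suc k # [Suc (Suc k)..<Suc (length xs)]"
  proof -
    have "[0..<Suc (length xs)] = [0..<k] @ [k..<Suc (length xs)]"
      using k by (metis le_add_diff_inverse upt_add_eq_append zero_le less_imp_le_nat less_SucI)
    also have "[k..<Suc (length xs)] = k # [Suc k..<Suc (length xs)]" using k by (simp add: upt_conv_Cons)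
    also have "[Suc k..<Suc (length xs)] = Suc k # [Suc (Suc k)..<Suc (length xs)]" using k by (simp add: upt_conv_Cons)
    finally show ?thesis .
  qed
  have e: "hE (string_graph xs) ! k = (xs ! k, [k, Suc k])" using k by (simp add: string_graph_def)
  have "is_path (string_graph xs) (take k xs @ xs ! k # drop (Suc k) xs) ([0..<k] @ k # Suc k # [Suc (Suc k)..<Suc (length xs)])"
    using p by (simp only: xs[symmetric] vs[symmetric])
  moreover have l1: "length [0..<k] = length (take k xs)" using k by simp
  moreover have l2: "k < length (hE (string_graph xs))" using k by (simp add: string_graph_def)
  ultimately show ?thesis using repl_fwd[OF _ _ _ e H] by blast
qed

lemma map_tr_wf: "Gm \<noteq> [] \<Longrightarrow> is_path G (map tr Gm) vs \<Longrightarrow> wf_seq G (tr C)"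
  by (rule path_wf_seq) (auto simp: tr_wf)

lemma HL_from_string:
  assumes "HL_der (string_graph (map tr Gm)) (tr C)" "is_path G (map tr Gm) vs" "Gm \<noteq> []"
  shows "HL_der G (tr C)"
proof (rule HL_iso[OF assms(1)])
  show "giso teq (string_graph (map tr Gm)) G"
    by (rule path_giso[OF string_is_path assms(2)]) (simp add: list.rel_refl teq_refl)
  show "teq (tr C) (tr C)" by (rule teq_refl)
  show "wf_seq G (tr C)" using map_tr_wf assms(2,3) by blast
qed

lemma HL_to_string:
  assumes "HL_der G (tr C)" "is_path G (map tr Gm) vs" "Gm \<noteq> []"
  shows "HL_der (string_graph (map tr Gm)) (tr C)"
proof (rule HL_iso[OF assms(1)])
  show "giso teq G (string_graph (map tr Gm))"
    by (rule path_giso[OF assms(2) string_is_path]) (simp add: list.rel_refl teq_refl)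
  show "teq (tr C) (tr C)" by (rule teq_refl)
  show "wf_seq (string_graph (map tr Gm)) (tr C)" using map_tr_wf string_is_path assms(3) by blast
qed

lemma string_map_Some: "\<exists>ws. is_path (map_hg Some (string_graph xs)) (map Some xs) ws"
  using is_path_map[OF string_is_path] by blast

lemma part1: "L_der Gm C \<Longrightarrow> HL_der (string_graph (map tr Gm)) (tr C)"
proof (induct rule: L_der.induct)
  case (L_ax p)
  show ?case using HL_ax[of p 2] by (simp add: string1)
next
  case (L_bs_l P A Gm B Dl C)
  define D where "D = string_graph [Some (tr A), None]"
  define Z where "Z = HDiv (tr B) D"
  define S where "S = string_graph (map tr P)"
  define H where "H = string_graph (map tr (Gm @ [B] @ Dl))"
  define D'' where "D'' = HG (hV D) ((hE D)[1 := (Some Z, snd (hE D ! 1))]) (hext D)"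
  define Inner where "Inner = map_hg the (repl_many D'' (\<lambda>j. if j = 1 then None else Some (map_hg Some S)))"
  define G where "G = repl H (length Gm) Inner"
  have D'': "D'' = string_graph [Some (tr A), Some Z]" by (simp add: D''_def D_def string2)
  have Ztr: "Z = tr (LBs A B)" by (simp add: Z_def D_def)
  have "repl_many D'' (\<lambda>j. if j = 1 then None else Some (map_hg Some S)) = repl D'' 0 (map_hg Some S)"
    using repl_many2[of D'' 1 "\<lambda>j. map_hg Some S"] by (simp add: D'' string2)
  moreover obtain ws where "is_path (map_hg Some S) (map Some (map tr P)) ws" using string_map_Some S_def by blast
  ultimately obtain vs1 where "is_path (repl_many D'' (\<lambda>j. if j = 1 then None else Some (map_hg Some S)))
      (map Some (map tr P) @ [Some Z]) vs1"
    using string_fwd[of "map_hg Some S" _ _ 0 "[Some (tr A), Some Z]"] L_bs_l(1) D'' by auto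
  then have "is_path Inner (map the (map Some (map tr P) @ [Some Z])) vs1"
    unfolding Inner_def by (rule is_path_map)
  then have "is_path Inner (map tr P @ [Z]) vs1" by (simp add: o_def)
  then have "\<exists>vs2. is_path (repl H (length Gm) Inner) (take (length Gm) (map tr (Gm @ [B] @ Dl)) @
      (map tr P @ [Z]) @ drop (Suc (length Gm)) (map tr (Gm @ [B] @ Dl))) vs2"
    unfolding H_def by (rule string_fwd) (use L_bs_l(1) in auto)
  then obtain vs2 where p2: "is_path G (map tr (Gm @ P @ [LBs A B] @ Dl)) vs2"
    using Ztr by (auto simp: G_def)
  have "HL_der G (tr C)"
  proof (rule HL_div_l[where N = "tr B" and D = D and ?j0.0 = 1 and i = "length Gm" and H = H
        and Hs = "\<lambda>j. S"])
    show "wf_tp (HDiv (tr B) D)" using tr_wf[of "LBs A B"] by (simp add: D_def)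
    show "1 < length (hE D)" "fst (hE D ! 1) = None" by (simp_all add: D_def string2)
    show "HL_der H (tr C)" using L_bs_l(5) by (simp add: H_def)
    show "length Gm < length (hE H)" "fst (hE H ! length Gm) = tr B" by (simp_all add: H_def string_graph_def nth_append)
    show "\<forall>j<length (hE D). j \<noteq> 1 \<longrightarrow> HL_der S (the (fst (hE D ! j)))"
      using L_bs_l(3) by (auto simp: D_def string2 S_def less_Suc_eq numeral_2_eq_2)
    show "G = repl H (length Gm) (map_hg the (repl_many (HG (hV D) ((hE D)[1 := (Some (HDiv (tr B) D), snd (hE D ! 1))]) (hext D))
        (\<lambda>j. if j = 1 then None else Some (map_hg Some S))))"
      by (simp add: G_def Inner_def D''_def Z_def)
    show "wf_seq G (tr C)" using map_tr_wf p2 by blast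
  qed
  then show ?case using HL_to_string p2 by blast
next
  case (L_bs_r P A B)
  define D where "D = string_graph [Some (tr A), None]"
  define F where "F = string_graph (map tr P)"
  obtain ws where "is_path (map_hg Some F) (map Some (map tr P)) ws" using string_map_Some F_def by blast
  then obtain vs1 where "is_path (repl D 1 (map_hg Some F)) ([Some (tr A)] @ map Some (map tr P)) vs1"
    using string_fwd[of "map_hg Some F" _ _ 1 "[Some (tr A), None]"] L_bs_r(1) by (auto simp: D_def)
  then have "is_path (map_hg the (repl D 1 (map_hg Some F))) (map the ([Some (tr A)] @ map Some (map tr P))) vs1"
    by (rule is_path_map)
  then have "is_path (map_hg the (repl D 1 (map_hg Some F))) (map tr (A # P)) vs1" by (simp add: o_def)
  then have h: "HL_der (map_hg the (repl D 1 (map_hg Some F))) (tr B)"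
    using HL_from_string L_bs_r(3) by blast
  have "HL_der F (HDiv (tr B) D)"
  proof (rule HL_div_r[OF _ _ _ h])
    show "wf_tp (HDiv (tr B) D)" using tr_wf[of "LBs A B"] by (simp add: D_def)
    show "1 < length (hE D)" "fst (hE D ! 1) = None" by (simp_all add: D_def string2)
    show "wf_seq F (HDiv (tr B) D)" using map_tr_wf[OF L_bs_r(1) string_is_path, of "LBs A B"]
      by (simp add: F_def D_def)
  qed
  then show ?case by (simp add: F_def D_def)
next
  case (L_sl_r P A B)
  define D where "D = string_graph [None, Some (tr A)]"
  define F where "F = string_graph (map tr P)"
  obtain ws where "is_path (map_hg Some F) (map Some (map tr P)) ws" using string_map_Some F_def by blast
  then obtain vs1 where "is_path (repl D 0 (map_hg Some F)) (map Some (map tr P) @ [Some (tr A)]) vs1"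
    using string_fwd[of "map_hg Some F" _ _ 0 "[None, Some (tr A)]"] L_sl_r(1) by (auto simp: D_def)
  then have "is_path (map_hg the (repl D 0 (map_hg Some F))) (map the (map Some (map tr P) @ [Some (tr A)])) vs1"
    by (rule is_path_map)
  then have "is_path (map_hg the (repl D 0 (map_hg Some F))) (map tr (P @ [A])) vs1" by (simp add: o_def)
  then have h: "HL_der (map_hg the (repl D 0 (map_hg Some F))) (tr B)"
    using HL_from_string L_sl_r(3) by blast
  have "HL_der F (HDiv (tr B) D)"
  proof (rule HL_div_r[OF _ _ _ h])
    show "wf_tp (HDiv (tr B) D)" using tr_wf[of "LSl B A"] by (simp add: D_def)
    show "0 < length (hE D)" "fst (hE D ! 0) = None" by (simp_all add: D_def string2)
    show "wf_seq F (HDiv (tr B) D)" using map_tr_wf[OF L_sl_r(1) string_is_path, of "LSl B A"]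
      by (simp add: F_def D_def)
  qed
  then show ?case by (simp add: F_def D_def)
next
  case (L_pd_l Gm A B Dl C)
  define F where "F = string_graph [tr A, tr B]"
  define G where "G = string_graph (map tr (Gm @ [LPd A B] @ Dl))"
  obtain vs1 where p1: "is_path (repl G (length Gm) F) (map tr (Gm @ [A, B] @ Dl)) vs1"
    using string_fwd[OF string_is_path[of "[tr A, tr B]"], of "length Gm" "map tr (Gm @ [LPd A B] @ Dl)"]
    by (auto simp: G_def F_def)
  have "HL_der G (tr C)"
  proof (rule HL_times_l)
    show "length Gm < length (hE G)" "fst (hE G ! length Gm) = HTimes F"
      by (simp_all add: G_def F_def string_graph_def nth_append)
    show "HL_der (repl G (length Gm) F) (tr C)" using HL_from_string[OF L_pd_l(2) p1] by simp
    show "wf_seq G (tr C)" unfolding G_def by (rule map_tr_wf[OF _ string_is_path]) simp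
  qed
  then show ?case by (simp add: G_def)
next
  case (L_sl_l P A Gm B Dl C)
  define D where "D = string_graph [None, Some (tr A)]"
  define Z where "Z = HDiv (tr B) D"
  define S where "S = string_graph (map tr P)"
  define H where "H = string_graph (map tr (Gm @ [B] @ Dl))"
  define D'' where "D'' = HG (hV D) ((hE D)[0 := (Some Z, snd (hE D ! 0))]) (hext D)"
  define Inner where "Inner = map_hg the (repl_many D'' (\<lambda>j. if j = 0 then None else Some (map_hg Some S)))"
  define G where "G = repl H (length Gm) Inner"
  have D'': "D'' = string_graph [Some Z, Some (tr A)]" by (simp add: D''_def D_def string2)
  have Ztr: "Z = tr (LSl B A)" by (simp add: Z_def D_def)
  have "repl_many D'' (\<lambda>j. if j = 0 then None else Some (map_hg Some S)) = repl D'' 1 (map_hg Some S)"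
    using repl_many2[of D'' 0 "\<lambda>j. map_hg Some S"] by (simp add: D'' string2)
  moreover obtain ws where "is_path (map_hg Some S) (map Some (map tr P)) ws" using string_map_Some S_def by blast
  ultimately obtain vs1 where "is_path (repl_many D'' (\<lambda>j. if j = 0 then None else Some (map_hg Some S)))
      ([Some Z] @ map Some (map tr P)) vs1"
    using string_fwd[of "map_hg Some S" _ _ 1 "[Some Z, Some (tr A)]"] L_sl_l(1) D'' by auto
  then have "is_path Inner (map the ([Some Z] @ map Some (map tr P))) vs1"
    unfolding Inner_def by (rule is_path_map)
  then have "is_path Inner (Z # map tr P) vs1" by (simp add: o_def)
  then have "\<exists>vs2. is_path (repl H (length Gm) Inner) (take (length Gm) (map tr (Gm @ [B] @ Dl)) @
      (Z # map tr P) @ drop (Suc (length Gm)) (map tr (Gm @ [B] @ Dl))) vs2"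
    unfolding H_def by (rule string_fwd) (use L_sl_l(1) in auto)
  then obtain vs2 where p2: "is_path G (map tr (Gm @ [LSl B A] @ P @ Dl)) vs2"
    using Ztr by (auto simp: G_def)
  have "HL_der G (tr C)"
  proof (rule HL_div_l[where N = "tr B" and D = D and ?j0.0 = 0 and i = "length Gm" and H = H
        and Hs = "\<lambda>j. S"])
    show "wf_tp (HDiv (tr B) D)" using tr_wf[of "LSl B A"] by (simp add: D_def)
    show "0 < length (hE D)" "fst (hE D ! 0) = None" by (simp_all add: D_def string2)
    show "HL_der H (tr C)" using L_sl_l(5) by (simp add: H_def)
    show "length Gm < length (hE H)" "fst (hE H ! length Gm) = tr B" by (simp_all add: H_def string_graph_def nth_append)
    show "\<forall>j<length (hE D). j \<noteq> 0 \<longrightarrow> HL_der S (the (fst (hE D ! j)))"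
      using L_sl_l(3) by (auto simp: D_def string2 S_def less_Suc_eq numeral_2_eq_2)
    show "G = repl H (length Gm) (map_hg the (repl_many (HG (hV D) ((hE D)[0 := (Some (HDiv (tr B) D), snd (hE D ! 0))]) (hext D))
        (\<lambda>j. if j = 0 then None else Some (map_hg Some S))))"
      by (simp add: G_def Inner_def D''_def Z_def)
    show "wf_seq G (tr C)" using map_tr_wf p2 by blast
  qed
  then show ?case using HL_to_string p2 by blast
next
  case (L_pd_r P Q A B)
  define M where "M = string_graph [tr A, tr B]"
  define SP where "SP = string_graph (map tr P)"
  define SQ where "SQ = string_graph (map tr Q)"
  define Hs where "Hs = (\<lambda>j::nat. if j = 0 then SP else SQ)"
  define G where "G = repl_many M (\<lambda>j. Some (Hs j))"
  have G: "G = repl (repl M 1 SQ) 0 SP" using repl_many2'[of M Hs] by (simp add: G_def M_def string2 Hs_def)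
  have pM: "is_path M ([tr A] @ tr B # []) ([0] @ 1 # 2 # [])"
    using string_is_path[of "[tr A, tr B]"] by (simp add: M_def numeral_2_eq_2 upt_rec)
  have eM: "1 < length (hE M)" "hE M ! 1 = (tr B, [1, 2])" "hE M ! 0 = (tr A, [0, 1])" by (simp_all add: M_def string2)
  have pQ: "is_path SQ (map tr Q) [0..<Suc (length (map tr Q))]" unfolding SQ_def by (rule string_is_path)
  have pP: "is_path SP (map tr P) [0..<Suc (length (map tr P))]" unfolding SP_def by (rule string_is_path)
  define mid where "mid = map ((+) (Suc (Max (insert 0 (hV M))))) (butlast (tl [0..<Suc (length (map tr Q))]))"
  have p1: "is_path (repl M 1 SQ) ([tr A] @ map tr Q @ []) ([0] @ 1 # mid @ 2 # [])"
    using repl_fwd[OF pM _ eM(1,2) pQ] L_pd_r(2) by (simp add: mid_def)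
  then have p1': "is_path (repl M 1 SQ) ([] @ tr A # map tr Q) ([] @ 0 # 1 # (mid @ [2]))" by simp
  have e1: "0 < length (hE (repl M 1 SQ))" "hE (repl M 1 SQ) ! 0 = (tr A, [0, 1])"
    by (simp_all add: repl_parts M_def string2)
  obtain vs2 where p2: "is_path G (map tr (P @ Q)) vs2"
    using repl_fwd[OF p1' _ e1 pP] L_pd_r(1) G by auto
  have "HL_der G (HTimes M)"
  proof (rule HL_times_r[OF _ _ G_def])
    show "wf_tp (HTimes M)" using tr_wf[of "LPd A B"] by (simp add: M_def)
    show "\<forall>j<length (hE M). HL_der (Hs j) (fst (hE M ! j))"
      using L_pd_r(4,6) by (auto simp: M_def string2 Hs_def SP_def SQ_def less_Suc_eq numeral_2_eq_2)
    show "wf_seq G (HTimes M)" using map_tr_wf[OF _ p2, of "LPd A B"] L_pd_r(1) by (simp add: M_def)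
  qed
  then have "HL_der G (tr (LPd A B))" by (simp add: M_def)
  then show ?case using HL_to_string p2 L_pd_r(1) by blast
qed

lemma repl_many_keep_aux:
  "k < length (hE G') \<Longrightarrow> j < length (hE G') \<Longrightarrow> (k < j \<or> f j = None) \<Longrightarrow>
   fst (hE G' ! j) \<in> fst ` set (hE (fold (\<lambda>i G'. case f i of None \<Rightarrow> G' | Some H \<Rightarrow> repl G' i H) (rev [0..<Suc k]) G'))"
proof (induct k arbitrary: G' j)
  case 0
  show ?case
  proof (cases "f 0")
    case None then show ?thesis using 0 by simp
  next
    case (Some H)
    then have j: "0 < j" using 0 by (cases j) auto
    have "hE G' ! j \<in> set (take 0 (hE G') @ drop (Suc 0) (hE G'))" using nth_in_rem[OF 0(2), of 0] j by simp
    then show ?thesis using Some by (simp add: labels_repl)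
  qed
next
  case (Suc k)
  define G1 where "G1 = (case f (Suc k) of None \<Rightarrow> G' | Some H \<Rightarrow> repl G' (Suc k) H)"
  have fold: "fold (\<lambda>i G'. case f i of None \<Rightarrow> G' | Some H \<Rightarrow> repl G' i H) (rev [0..<Suc (Suc k)]) G' =
     fold (\<lambda>i G'. case f i of None \<Rightarrow> G' | Some H \<Rightarrow> repl G' i H) (rev [0..<Suc k]) G1"
    by (simp add: G1_def)
  show ?case
  proof (cases "f (Suc k)")
    case None
    then have "G1 = G'" by (simp add: G1_def)
    then show ?thesis unfolding fold using Suc.hyps[of G' j] Suc.prems by auto
  next
    case (Some H)
    then have G1: "G1 = repl G' (Suc k) H" by (simp add: G1_def)
    have hG1: "hE G1 = take (Suc k) (hE G') @ drop (Suc (Suc k)) (hE G') @ map (\<lambda>(l, a). (l, map (\<lambda>v. case map_of (zip (hext H) (snd (hE G' ! Suc k))) v of None \<Rightarrow> Suc (Max (insert 0 (hV G'))) + v | Some u \<Rightarrow> u) a)) (hE H)"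
      by (simp add: G1 repl_parts)
    have lG1: "k < length (hE G1)" using Suc.prems(1) hG1 by simp
    show ?thesis
    proof (cases "j \<le> k")
      case True
      then have fj: "f j = None" using Suc.prems(3) by auto
      have "hE G1 ! j = hE G' ! j" using True Suc.prems(1) hG1 by (simp add: nth_append)
      moreover have "j < length (hE G1)" using lG1 True by simp
      ultimately show ?thesis unfolding fold using Suc.hyps[of G1 j] lG1 fj by auto
    next
      case False
      then have "j \<noteq> Suc k" using Suc.prems(3) Some by auto
      then have jk: "Suc k < j" using False by simp
      obtain r where r: "j = Suc (Suc k) + r" using jk by (metis Suc_leI le_Suc_ex)
      have lt: "length (take (Suc k) (hE G')) = Suc k" using Suc.prems(1) by simp
      have lr: "r < length (drop (Suc (Suc k)) (hE G'))" using r Suc.prems(2) by simp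
      have "hE G1 ! (j - 1) = (take (Suc k) (hE G') @ (drop (Suc (Suc k)) (hE G') @ map (\<lambda>(l, a). (l, map (\<lambda>v. case map_of (zip (hext H) (snd (hE G' ! Suc k))) v of None \<Rightarrow> Suc (Max (insert 0 (hV G'))) + v | Some u \<Rightarrow> u) a)) (hE H))) ! (length (take (Suc k) (hE G')) + r)"
        using hG1 lt r by simp
      also have "\<dots> = drop (Suc (Suc k)) (hE G') ! r" using lr by (simp only: nth_append_length_plus nth_append) simp
      also have "\<dots> = hE G' ! j" using r Suc.prems(2) by simp
      finally have "hE G1 ! (j - 1) = hE G' ! j" .
      moreover have "j - 1 < length (hE G1)" using jk Suc.prems hG1 by simp
      moreover have "k < j - 1" using jk by simp
      ultimately show ?thesis unfolding fold using Suc.hyps[of G1 "j - 1"] lG1 by auto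
    qed
  qed
qed

lemma repl_many_keep: "j < length (hE G) \<Longrightarrow> f j = None \<Longrightarrow> fst (hE G ! j) \<in> fst ` set (hE (repl_many G f))"
proof -
  assume a: "j < length (hE G)" "f j = None"
  have e: "Suc (length (hE G) - 1) = length (hE G)" using a by simp
  have "fst (hE G ! j) \<in> fst ` set (hE (fold (\<lambda>i G'. case f i of None \<Rightarrow> G' | Some H \<Rightarrow> repl G' i H) (rev [0..<Suc (length (hE G) - 1)]) G))"
    by (rule repl_many_keep_aux) (use a in auto)
  then show ?thesis unfolding repl_many_def by (simp only: e)
qed

lemma path_rev:
  assumes "giso R G H" "is_path H zs ws" "\<forall>e\<in>set (hE G). set (snd e) \<subseteq> hV G" "set (hext G) \<subseteq> hV G"
  shows "\<exists>ys vs. is_path G ys vs \<and> list_all2 R ys zs"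
proof -
  have "giso (conversep R) H G" using giso_sym assms(1,3,4) by blast
  from giso_path[OF this assms(2)] obtain ys vs where "is_path G ys vs" "list_all2 (conversep R) zs ys" by blast
  then show ?thesis by (metis list_all2_conv_all_nth conversep_iff)
qed

lemma path_relabel:
  "is_path D ys vs \<Longrightarrow> mset (hE D') = mset (pedges vs ys') \<Longrightarrow> hV D' = hV D \<Longrightarrow> hext D' = hext D \<Longrightarrow>
   length ys' = length ys \<Longrightarrow> is_path D' ys' vs"
  unfolding is_path_def by simp

lemma path_split_at:
  assumes "is_path H ys vs" "k < length ys"
  shows "is_path H (take k ys @ ys ! k # drop (Suc k) ys) (take k vs @ vs ! k # vs ! Suc k # drop (Suc (Suc k)) vs)"
    "length (take k vs) = length (take k ys)"
proof -
  have l: "length vs = Suc (length ys)" using assms unfolding is_path_def by simp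
  have "take k ys @ ys ! k # drop (Suc k) ys = ys" using assms(2) by (simp add: id_take_nth_drop[symmetric])
  moreover have "take k vs @ vs ! k # vs ! Suc k # drop (Suc (Suc k)) vs = vs"
    using split_at2[of k vs] assms(2) l by simp
  ultimately show "is_path H (take k ys @ ys ! k # drop (Suc k) ys) (take k vs @ vs ! k # vs ! Suc k # drop (Suc (Suc k)) vs)"
    using assms(1) by simp
  show "length (take k vs) = length (take k ys)" using l assms(2) by simp
qed

lemma labels_map_hg: "fst ` set (hE (map_hg g G)) = g ` fst ` set (hE G)"
  by (force simp: hE_map_hg image_iff split: prod.splits)

lemma wf_seq_D:
  assumes "wf_seq G T"
  shows "finite (hV G)" "distinct (hext G)" "set (hext G) \<subseteq> hV G"
    "\<forall>e\<in>set (hE G). set (snd e) \<subseteq> hV G" "\<forall>e\<in>set (hE G). length (snd e) = tp_ar (fst e)"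
    "\<forall>e\<in>set (hE G). wf_tp (fst e)" "wf_tp T" "length (hext G) = tp_ar T"
  using assms unfolding wf_seq_def wf_hg_def ok_tp_def by auto

lemma wf_div_D:
  assumes "wf_tp (HDiv N D)"
  shows "wf_tp N" "wf_hg ok_opt D" "\<forall>x\<in>set (hE D). \<forall>T. fst x = Some T \<longrightarrow> wf_tp T"
  using assms by (auto elim: wf_tp.cases)

lemma wf_times_D:
  assumes "wf_tp (HTimes M)"
  shows "wf_hg ok_tp M" "\<forall>x\<in>set (hE M). wf_tp (fst x)"
  using assms by (auto elim: wf_tp.cases)

lemma labels_all: "(\<forall>x\<in>set E. P (fst x)) \<Longrightarrow> l \<in> fst ` set E \<Longrightarrow> P l"
  by auto

abbreviation RT :: "htp \<Rightarrow> ltp \<Rightarrow> bool" where "RT y A \<equiv> teq y (tr A)"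

lemma RT_trans: "list_all2 teq ys ys' \<Longrightarrow> list_all2 RT ys Gm \<Longrightarrow> (\<forall>y\<in>set ys. wf_tp y) \<Longrightarrow> list_all2 RT ys' Gm"
proof -
  assume a: "list_all2 teq ys ys'" "list_all2 RT ys Gm" "\<forall>y\<in>set ys. wf_tp y"
  have "RT (ys' ! k) (Gm ! k)" if k: "k < length ys'" for k
  proof -
    have k': "k < length ys" using a(1) k by (simp add: list_all2_lengthD)
    have "teq (ys ! k) (ys' ! k)" "RT (ys ! k) (Gm ! k)" using a k k' by (auto simp: list_all2_conv_all_nth)
    moreover have "wf_tp (ys ! k)" using a(3) k' by simp
    ultimately show ?thesis using teq_sym teq_trans by blast
  qed
  then show ?thesis using a by (auto simp: list_all2_conv_all_nth)
qed

lemma labels_rm2: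
  assumes "length (hE M) = 2"
  shows "fst ` set (hE HA) \<subseteq> fst ` set (hE (repl (repl M 1 HB) 0 HA))"
    "fst ` set (hE HB) \<subseteq> fst ` set (hE (repl (repl M 1 HB) 0 HA))"
proof -
  show "fst ` set (hE HA) \<subseteq> fst ` set (hE (repl (repl M 1 HB) 0 HA))" unfolding labels_repl by blast
  obtain e0 e1 where M: "hE M = [e0, e1]" using assms by (auto simp: length_Suc_conv numeral_2_eq_2)
  have h: "fst \<circ> (\<lambda>(l, a). (l, map f a)) = fst" for f :: "nat \<Rightarrow> nat"
    by (auto split: prod.splits)
  have "fst ` set (hE HB) \<subseteq> fst ` set (take 0 (hE (repl M 1 HB)) @ drop (Suc 0) (hE (repl M 1 HB)))"
    by (simp add: repl_parts M image_comp h)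
  then show "fst ` set (hE HB) \<subseteq> fst ` set (hE (repl (repl M 1 HB) 0 HA))" unfolding labels_repl by blast
qed

lemma part2:
  "HL_der G T \<Longrightarrow> (\<forall>x\<in>set (hE G). \<exists>A. teq (fst x) (tr A)) \<Longrightarrow> (\<exists>A. teq T (tr A)) \<Longrightarrow>
   \<exists>Gm C ys vs. is_path G ys vs \<and> list_all2 RT ys Gm \<and> teq T (tr C) \<and> L_der Gm C"
proof (induct rule: HL_der.induct)
  case (HL_ax a n)
  then obtain X where "teq (HPr a n) (tr X)" by blast
  then have X: "X = LPr a \<and> n = 2" by (cases X) (auto elim: teq.cases)
  have "is_path (handle (HPr a n) n) [HPr a 2] [0..<Suc (length [HPr a 2])]"
    using string_is_path[of "[HPr a 2]"] X by (simp add: string1)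
  moreover have "n = 2" using X by simp
  moreover have "list_all2 RT [HPr a 2] [LPr a]" by (simp add: teq_refl)
  moreover have "teq (HPr a n) (tr (LPr a))" using X by (simp add: teq_refl)
  ultimately show ?case using L_ax by blast
next
  case (HL_iso H A H' A')
  have wH: "wf_seq H A" using HL_wf[OF HL_iso(1)] .
  have lH: "\<forall>x\<in>set (hE H). \<exists>B. teq (fst x) (tr B)"
  proof
    fix x assume "x \<in> set (hE H)"
    then obtain e' where "e' \<in> set (hE H')" "teq (fst x) (fst e')" using giso_labels HL_iso(3) by blast
    then show "\<exists>B. teq (fst x) (tr B)" using HL_iso(6) teq_trans by blast
  qed
  have tA: "\<exists>B. teq A (tr B)" using HL_iso(4,7) teq_trans by blast
  obtain Gm C ys vs where ih: "is_path H ys vs" "list_all2 RT ys Gm" "teq A (tr C)" "L_der Gm C"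
    using HL_iso(2)[OF lH tA] by blast
  obtain ys' vs' where p': "is_path H' ys' vs'" "list_all2 teq ys ys'" using giso_path[OF HL_iso(3) ih(1)] by blast
  have "\<forall>y\<in>set ys. wf_tp y" using wf_seq_D(6)[OF wH] path_labels[OF ih(1)] by (metis imageE)
  then have "list_all2 RT ys' Gm" using RT_trans p'(2) ih(2) by blast
  moreover have "teq A' (tr C)" using teq_sym[OF HL_iso(4) wf_seq_D(7)[OF wH]] ih(3) teq_trans by blast
  ultimately show ?case using p'(1) ih(4) by blast
next
  case (HL_times_l i G F A)
  note w = wf_seq_D[OF HL_times_l(5)]
  have "HTimes F \<in> fst ` set (hE G)" using HL_times_l(1,2) by (metis image_eqI nth_mem)
  then obtain X where "teq (HTimes F) (tr X)" using HL_times_l(6) by fastforce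
  then obtain A1 B1 where X: "X = LPd A1 B1" "giso teq F (string_graph [tr A1, tr B1])"
    by (cases rule: teq_tr_cases) auto
  have wF: "wf_tp (HTimes F)" using w(6) HL_times_l(1,2) by (metis nth_mem)
  note wF' = wf_times_D[OF wF]
  obtain ysF vsF where pF: "is_path F ysF vsF" "list_all2 teq ysF [tr A1, tr B1]"
    using path_rev[OF X(2) string_is_path] wF'(1) unfolding wf_hg_def by blast
  obtain a' b' where ab: "ysF = [a', b']" "teq a' (tr A1)" "teq b' (tr B1)"
    using pF(2) by (auto simp: list_all2_Cons2)
  obtain w0 w1 w2 where vsF: "vsF = [w0, w1, w2]" using pF(1) ab(1) unfolding is_path_def
    by (auto simp: length_Suc_conv)
  have wab: "wf_tp a'" "wf_tp b'" using labels_all[OF wF'(2)] path_labels[OF pF(1)] ab(1) by auto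
  have lR: "\<forall>x\<in>set (hE (repl G i F)). \<exists>B. teq (fst x) (tr B)"
  proof
    fix x assume "x \<in> set (hE (repl G i F))"
    then have "fst x \<in> fst ` set (hE (repl G i F))" by simp
    then have "fst x \<in> fst ` set (take i (hE G) @ drop (Suc i) (hE G)) \<union> fst ` set (hE F)"
      unfolding labels_repl .
    moreover have "fst ` set (take i (hE G) @ drop (Suc i) (hE G)) \<subseteq> fst ` set (hE G)"
      using rem_sub by (rule image_mono)
    moreover have "fst ` set (hE F) = {a', b'}" using path_labels[OF pF(1)] ab(1) by simp
    ultimately have "fst x \<in> fst ` set (hE G) \<or> fst x = a' \<or> fst x = b'" by blast
    then show "\<exists>B. teq (fst x) (tr B)" using labels_all[OF HL_times_l(6)] ab by blast
  qed
  obtain Gm C ys vs where ih: "is_path (repl G i F) ys vs" "list_all2 RT ys Gm" "teq A (tr C)" "L_der Gm C"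
    using HL_times_l(4)[OF lR HL_times_l(7)] by blast
  have "length (snd (hE G ! i)) = 2"
  proof -
    have "length (snd (hE G ! i)) = tp_ar (HTimes F)" using w(5) HL_times_l(1,2) by (metis nth_mem)
    also have "\<dots> = 2" using pF(1) unfolding is_path_def by simp
    finally show ?thesis .
  qed
  then obtain x y where xy: "snd (hE G ! i) = [x, y]" by (auto simp: length_Suc_conv numeral_2_eq_2)
  obtain Y1 Y2 V1 V2 where inv: "ys = Y1 @ a' # b' # Y2" "length V1 = length Y1"
      "is_path G (Y1 @ fst (hE G ! i) # Y2) (V1 @ x # y # V2)"
    using repl_inv_times[OF ih(1) _ HL_times_l(1) xy w(1) w(3) w(4)] pF(1) ab(1) vsF by blast
  obtain Gm1 A' B' Gm2 where Gm: "Gm = Gm1 @ A' # B' # Gm2" "list_all2 RT Y1 Gm1" "RT a' A'" "RT b' B'"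
      "list_all2 RT Y2 Gm2"
    using ih(2) inv(1) by (auto simp: list_all2_append1 list_all2_Cons1)
  have "A' = A1" using teq_tr_same[OF Gm(3) ab(2) wab(1)] by simp
  moreover have "B' = B1" using teq_tr_same[OF Gm(4) ab(3) wab(2)] by simp
  ultimately have "L_der (Gm1 @ [LPd A1 B1] @ Gm2) C" using L_pd_l[of Gm1 A1 B1 Gm2 C] ih(4) Gm(1) by simp
  moreover have "list_all2 RT (Y1 @ fst (hE G ! i) # Y2) (Gm1 @ [LPd A1 B1] @ Gm2)"
    using Gm \<open>teq (HTimes F) (tr X)\<close> X(1) HL_times_l(2) by (simp add: list_all2_appendI)
  ultimately show ?case using inv(3) ih(3) by blast
next
  case (HL_times_r M Hs G)
  note w = wf_seq_D[OF HL_times_r(4)]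
  obtain X where "teq (HTimes M) (tr X)" using HL_times_r(6) by blast
  then obtain A1 B1 where X: "X = LPd A1 B1" "giso teq M (string_graph [tr A1, tr B1])"
    by (cases rule: teq_tr_cases) auto
  note wM = wf_times_D[OF HL_times_r(1)]
  obtain ysM vsM where pM: "is_path M ysM vsM" "list_all2 teq ysM [tr A1, tr B1]"
    using path_rev[OF X(2) string_is_path] wM(1) unfolding wf_hg_def by blast
  obtain a' b' where ab: "ysM = [a', b']" "teq a' (tr A1)" "teq b' (tr B1)"
    using pM(2) by (auto simp: list_all2_Cons2)
  obtain m0 m1 m2 where vsM: "vsM = [m0, m1, m2]" using pM(1) ab(1) unfolding is_path_def
    by (auto simp: length_Suc_conv)
  have pM2: "is_path M [a', b'] [m0, m1, m2]" using pM(1) ab vsM by simp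
  have wab: "wf_tp a'" "wf_tp b'" using labels_all[OF wM(2)] path_labels[OF pM2] by auto
  have E: "hE M = [(a', [m0, m1]), (b', [m1, m2])] \<or> hE M = [(b', [m1, m2]), (a', [m0, m1])]"
    by (rule two_edges[OF pM2])
  then have lM: "length (hE M) = 2" by auto
  have G: "G = repl (repl M 1 (Hs 1)) 0 (Hs 0)" using HL_times_r(3) repl_many2'[OF lM] by simp
  have IH: "\<exists>Gm C ys vs. is_path (Hs j) ys vs \<and> list_all2 RT ys Gm \<and> teq (fst (hE M ! j)) (tr C) \<and> L_der Gm C"
    if j: "j < 2" for j
  proof -
    have lj: "fst ` set (hE (Hs j)) \<subseteq> fst ` set (hE G)"
      using labels_rm2[OF lM, where HA = "Hs 0" and HB = "Hs 1"] j G by (cases j) auto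
    have "\<forall>x\<in>set (hE (Hs j)). \<exists>B. teq (fst x) (tr B)"
      using labels_all[OF HL_times_r(5)] lj by blast
    moreover have "\<exists>B. teq (fst (hE M ! j)) (tr B)" using E j ab by (cases j) (auto simp: less_Suc_eq)
    ultimately show ?thesis using HL_times_r(2) j lM by auto
  qed
  obtain Gm0 C0 ys0 ws0 where i0: "is_path (Hs 0) ys0 ws0" "list_all2 RT ys0 Gm0" "teq (fst (hE M ! 0)) (tr C0)" "L_der Gm0 C0"
    using IH[of 0] by auto
  obtain Gm1 C1 ys1 ws1 where i1: "is_path (Hs 1) ys1 ws1" "list_all2 RT ys1 Gm1" "teq (fst (hE M ! 1)) (tr C1)" "L_der Gm1 C1"
    using IH[of 1] by auto
  have ne: "Gm0 \<noteq> []" "Gm1 \<noteq> []" "ys0 \<noteq> []" "ys1 \<noteq> []"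
    using L_ne[OF i0(4)] L_ne[OF i1(4)] i0(2) i1(2) by (auto simp: list_all2_lengthD)
  have lw1: "length ws1 = Suc (length ys1)" using i1(1) unfolding is_path_def by simp
  define mid where "mid = map ((+) (Suc (Max (insert 0 (hV M))))) (butlast (tl ws1))"
  have lmid: "length (m0 # mid) = length ys1" using lw1 ne(4) by (simp add: mid_def)
  from E show ?case
  proof
    assume E1: "hE M = [(a', [m0, m1]), (b', [m1, m2])]"
    have "C0 = A1" using teq_tr_same[OF i0(3)[unfolded E1, simplified] ab(2) wab(1)] .
    moreover have "C1 = B1" using teq_tr_same[OF i1(3)[unfolded E1, simplified] ab(3) wab(2)] .
    moreover have pMa: "is_path M ([a'] @ b' # []) ([m0] @ m1 # m2 # [])" using pM2 by simp
    have "is_path (repl M 1 (Hs 1)) ([a'] @ ys1 @ []) ([m0] @ m1 # mid @ m2 # [])"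
      unfolding mid_def by (rule repl_fwd[OF pMa _ _ _ i1(1) ne(4)]) (use E1 in simp_all)
    then have "is_path (repl M 1 (Hs 1)) ([] @ a' # ys1) ([] @ m0 # m1 # (mid @ [m2]))" by simp
    moreover have "0 < length (hE (repl M 1 (Hs 1)))" "hE (repl M 1 (Hs 1)) ! 0 = (a', [m0, m1])"
      using E1 by (simp_all add: repl_parts)
    ultimately obtain vs where "is_path G (ys0 @ ys1) vs" and "C0 = A1" "C1 = B1"
      using repl_fwd[OF _ _ _ _ i0(1) ne(3)] G by fastforce
    moreover have "list_all2 RT (ys0 @ ys1) (Gm0 @ Gm1)" using i0(2) i1(2) by (rule list_all2_appendI)
    moreover have "L_der (Gm0 @ Gm1) (LPd A1 B1)" using L_pd_r[OF ne(1,2)] i0(4) i1(4) \<open>C0 = A1\<close> \<open>C1 = B1\<close> by simp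
    ultimately show ?case using \<open>teq (HTimes M) (tr X)\<close> X(1) by blast
  next
    assume E2: "hE M = [(b', [m1, m2]), (a', [m0, m1])]"
    have "C0 = B1" using teq_tr_same[OF i0(3)[unfolded E2, simplified] ab(3) wab(2)] .
    moreover have "C1 = A1" using teq_tr_same[OF i1(3)[unfolded E2, simplified] ab(2) wab(1)] .
    moreover have pMa: "is_path M ([] @ a' # [b']) ([] @ m0 # m1 # [m2])" using pM2 by simp
    have "is_path (repl M 1 (Hs 1)) ([] @ ys1 @ [b']) ([] @ m0 # mid @ m1 # [m2])"
      unfolding mid_def by (rule repl_fwd[OF pMa _ _ _ i1(1) ne(4)]) (use E2 in simp_all)
    then have "is_path (repl M 1 (Hs 1)) (ys1 @ b' # []) ((m0 # mid) @ m1 # m2 # [])" by simp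
    moreover have "0 < length (hE (repl M 1 (Hs 1)))" "hE (repl M 1 (Hs 1)) ! 0 = (b', [m1, m2])"
      using E2 by (simp_all add: repl_parts)
    ultimately obtain vs where "is_path G (ys1 @ ys0) vs" and "C0 = B1" "C1 = A1"
      using repl_fwd[OF _ lmid _ _ i0(1) ne(3)] G by fastforce
    moreover have "list_all2 RT (ys1 @ ys0) (Gm1 @ Gm0)" using i1(2) i0(2) by (rule list_all2_appendI)
    moreover have "L_der (Gm1 @ Gm0) (LPd A1 B1)" using L_pd_r[OF ne(2,1)] i0(4) i1(4) \<open>C0 = B1\<close> \<open>C1 = A1\<close> by simp
    ultimately show ?case using \<open>teq (HTimes M) (tr X)\<close> X(1) by blast
  qed
next
  case (HL_div_r N D j0 F)
  note wD = wf_div_D[OF HL_div_r(1)]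
  note wF = wf_seq_D[OF HL_div_r(6)]
  have wDa: "\<forall>e\<in>set (hE D). set (snd e) \<subseteq> hV D" "set (hext D) \<subseteq> hV D"
    using wD(2) unfolding wf_hg_def by auto
  define D2 where "D2 = map_hg the D"
  have eq: "map_hg the (repl D j0 (map_hg Some F)) = repl D2 j0 F"
    using map_hg_repl[OF HL_div_r(2), of the "map_hg Some F"] by (simp add: D2_def map_hg_the_Some)
  have lD2: "length (hE D2) = length (hE D)" by (simp add: D2_def hE_map_hg)
  obtain X where tX: "teq (HDiv N D) (tr X)" using HL_div_r(8) by blast
  then show ?case
  proof (cases rule: teq_tr_cases)
    case (sl A1 B1 N' D')
    then have N: "teq N (tr A1)" and gD: "giso (rel_option teq) D (string_graph [None, Some (tr B1)])" by auto
    obtain ysD vsD where pD: "is_path D ysD vsD" "list_all2 (rel_option teq) ysD [None, Some (tr B1)]"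
      using path_rev[OF gD string_is_path wDa] by blast
    obtain b' where ab: "ysD = [None, Some b']" "teq b' (tr B1)"
      using pD(2) by (auto simp: list_all2_Cons2 option_rel_Some2)
    obtain g0 g1 g2 where vsD: "vsD = [g0, g1, g2]" using pD(1) ab(1) unfolding is_path_def
      by (auto simp: length_Suc_conv)
    have pD1: "is_path D [None, Some b'] [g0, g1, g2]" using pD(1) ab vsD by simp
    have "Some b' \<in> fst ` set (hE D)" using path_labels[OF pD1] by simp
    then have wb: "wf_tp b'" using labels_all[where P = "\<lambda>l. \<forall>T. l = Some T \<longrightarrow> wf_tp T", OF wD(3)] by blast
    have E: "hE D = [(None, [g0, g1]), (Some b', [g1, g2])] \<or> hE D = [(Some b', [g1, g2]), (None, [g0, g1])]"
      by (rule two_edges[OF pD1])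
    have ej: "hE D ! j0 = (None, [g0, g1])" using E HL_div_r(2,3) by (auto simp: less_Suc_eq)
    have pD2: "is_path D2 [the None, b'] [g0, g1, g2]" using is_path_map[OF pD1, of the] by (simp add: D2_def)
    have ej2: "hE D2 ! j0 = (the None, [g0, g1])" using ej HL_div_r(2) by (simp add: D2_def hE_map_hg)
    have mrem: "mset (take j0 (hE D2) @ drop (Suc j0) (hE D2)) = {#(b', [g1, g2])#}"
      using mset_remove_nth[of j0 "hE D2"] path2_edges(1)[OF pD2] ej2 HL_div_r(2) lD2 by simp
    then have srem: "set (take j0 (hE D2) @ drop (Suc j0) (hE D2)) = {(b', [g1, g2])}"
      by (metis set_mset_mset set_mset_add_mset_insert set_mset_empty)
    have lR: "\<forall>x\<in>set (hE (repl D2 j0 F)). \<exists>B. teq (fst x) (tr B)"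
    proof
      fix x assume "x \<in> set (hE (repl D2 j0 F))"
      then have "fst x \<in> fst ` set (hE (repl D2 j0 F))" by simp
      then have "fst x = b' \<or> fst x \<in> fst ` set (hE F)" unfolding labels_repl srem by simp
      then show "\<exists>B. teq (fst x) (tr B)" using labels_all[OF HL_div_r(7)] ab(2) by blast
    qed
    obtain Gm C ys vs where ih: "is_path (repl D2 j0 F) ys vs" "list_all2 RT ys Gm" "teq N (tr C)" "L_der Gm C"
      using HL_div_r(5)[unfolded eq, OF lR] N by blast
    have CA: "C = A1" using teq_tr_same[OF ih(3) N wD(1)] .
    have ar: "tp_ar (HDiv N D) = 2" using E by auto
    obtain ys' vs' where inv: "ys = ys' @ [b']" "ys' \<noteq> []" "is_path F ys' vs'"
      using repl_inv_sl[OF ih(1) pD2 _ ej2 wF(2) _ wF(3) wF(4)] HL_div_r(2) lD2 wF(8) ar by auto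
    obtain Gm' B' where Gm: "Gm = Gm' @ [B']" "list_all2 RT ys' Gm'" "RT b' B'"
      using ih(2) inv(1) by (auto simp: list_all2_append1 list_all2_Cons1)
    have "B' = B1" using teq_tr_same[OF Gm(3) ab(2) wb] .
    have "Gm' \<noteq> []" using inv(2) Gm(2) by (auto simp: list_all2_lengthD)
    then have "L_der Gm' (LSl A1 B1)" using L_sl_r[of Gm' B1 A1] ih(4) Gm(1) CA \<open>B' = B1\<close> by simp
    then show ?thesis using inv(3) Gm(2) tX sl(1) by blast
  next
    case (bs A1 B1 N' D')
    then have N: "teq N (tr A1)" and gD: "giso (rel_option teq) D (string_graph [Some (tr B1), None])" by auto
    obtain ysD vsD where pD: "is_path D ysD vsD" "list_all2 (rel_option teq) ysD [Some (tr B1), None]"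
      using path_rev[OF gD string_is_path wDa] by blast
    obtain b' where ab: "ysD = [Some b', None]" "teq b' (tr B1)"
      using pD(2) by (auto simp: list_all2_Cons2 option_rel_Some2)
    obtain g0 g1 g2 where vsD: "vsD = [g0, g1, g2]" using pD(1) ab(1) unfolding is_path_def
      by (auto simp: length_Suc_conv)
    have pD1: "is_path D [Some b', None] [g0, g1, g2]" using pD(1) ab vsD by simp
    have "Some b' \<in> fst ` set (hE D)" using path_labels[OF pD1] by simp
    then have wb: "wf_tp b'" using labels_all[where P = "\<lambda>l. \<forall>T. l = Some T \<longrightarrow> wf_tp T", OF wD(3)] by blast
    have E: "hE D = [(Some b', [g0, g1]), (None, [g1, g2])] \<or> hE D = [(None, [g1, g2]), (Some b', [g0, g1])]"
      by (rule two_edges[OF pD1])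
    have ej: "hE D ! j0 = (None, [g1, g2])" using E HL_div_r(2,3) by (auto simp: less_Suc_eq)
    have pD2: "is_path D2 [b', the None] [g0, g1, g2]" using is_path_map[OF pD1, of the] by (simp add: D2_def)
    have ej2: "hE D2 ! j0 = (the None, [g1, g2])" using ej HL_div_r(2) by (simp add: D2_def hE_map_hg)
    have mrem: "mset (take j0 (hE D2) @ drop (Suc j0) (hE D2)) = {#(b', [g0, g1])#}"
      using mset_remove_nth[of j0 "hE D2"] path2_edges(1)[OF pD2] ej2 HL_div_r(2) lD2 by simp
    then have srem: "set (take j0 (hE D2) @ drop (Suc j0) (hE D2)) = {(b', [g0, g1])}"
      by (metis set_mset_mset set_mset_add_mset_insert set_mset_empty)
    have lR: "\<forall>x\<in>set (hE (repl D2 j0 F)). \<exists>B. teq (fst x) (tr B)"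
    proof
      fix x assume "x \<in> set (hE (repl D2 j0 F))"
      then have "fst x \<in> fst ` set (hE (repl D2 j0 F))" by simp
      then have "fst x = b' \<or> fst x \<in> fst ` set (hE F)" unfolding labels_repl srem by simp
      then show "\<exists>B. teq (fst x) (tr B)" using labels_all[OF HL_div_r(7)] ab(2) by blast
    qed
    obtain Gm C ys vs where ih: "is_path (repl D2 j0 F) ys vs" "list_all2 RT ys Gm" "teq N (tr C)" "L_der Gm C"
      using HL_div_r(5)[unfolded eq, OF lR] N by blast
    have CA: "C = A1" using teq_tr_same[OF ih(3) N wD(1)] .
    have ar: "tp_ar (HDiv N D) = 2" using E by auto
    obtain ys' vs' where inv: "ys = b' # ys'" "ys' \<noteq> []" "is_path F ys' vs'"
      using repl_inv_bs[OF ih(1) pD2 _ ej2 wF(2) _ wF(3) wF(4)] HL_div_r(2) lD2 wF(8) ar by auto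
    obtain Gm' B' where Gm: "Gm = B' # Gm'" "list_all2 RT ys' Gm'" "RT b' B'"
      using ih(2) inv(1) by (auto simp: list_all2_Cons1)
    have "B' = B1" using teq_tr_same[OF Gm(3) ab(2) wb] .
    have "Gm' \<noteq> []" using inv(2) Gm(2) by (auto simp: list_all2_lengthD)
    then have "L_der Gm' (LBs B1 A1)" using L_bs_r[of Gm' B1 A1] ih(4) Gm(1) CA \<open>B' = B1\<close> by simp
    then show ?thesis using inv(3) Gm(2) tX bs(1) by blast
  qed auto
next
  case (HL_div_l N D j0 H A i Hs G)
  note wD = wf_div_D[OF HL_div_l(1)]
  note wG = wf_seq_D[OF HL_div_l(10)]
  have wDa: "\<forall>e\<in>set (hE D). set (snd e) \<subseteq> hV D" "set (hext D) \<subseteq> hV D"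
    using wD(2) unfolding wf_hg_def by auto
  define Z where "Z = HDiv N D"
  define D'' where "D'' = HG (hV D) ((hE D)[j0 := (Some Z, snd (hE D ! j0))]) (hext D)"
  define f where "f = (\<lambda>j. if j = j0 then None else Some (map_hg Some (Hs j)))"
  define Inner where "Inner = map_hg the (repl_many D'' f)"
  have G: "G = repl H i Inner" using HL_div_l(9) by (simp add: Inner_def D''_def f_def Z_def)
  have lD'': "length (hE D'') = length (hE D)" by (simp add: D''_def)
  have lI: "fst ` set (hE Inner) \<subseteq> fst ` set (hE G)" unfolding G labels_repl by blast
  have "Some Z \<in> fst ` set (hE (repl_many D'' f))"
    using repl_many_keep[of j0 D'' f] HL_div_l(2) lD'' by (simp add: f_def D''_def)
  then have "Z \<in> fst ` set (hE Inner)" unfolding Inner_def labels_map_hg by force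
  then have "Z \<in> fst ` set (hE G)" using lI by blast
  then obtain X where tX: "teq Z (tr X)" using labels_all[OF HL_div_l(11)] by blast
  have lH: "\<forall>x\<in>set (hE H). \<exists>B. teq (fst x) (tr B)" if N: "teq N (tr A1)" for A1
  proof
    fix x assume "x \<in> set (hE H)"
    then obtain k where k: "k < length (hE H)" "x = hE H ! k" by (auto simp: in_set_conv_nth)
    show "\<exists>B. teq (fst x) (tr B)"
    proof (cases "k = i")
      case True then show ?thesis using N k HL_div_l(7) by blast
    next
      case False
      then have "x \<in> set (take i (hE H) @ drop (Suc i) (hE H))" using nth_in_rem k by blast
      then have "fst x \<in> fst ` set (hE G)" unfolding G labels_repl by blast
      then show ?thesis using labels_all[OF HL_div_l(11)] by blast
    qed
  qed
  have IHH: "\<exists>k GmH C ysH vsH. is_path H ysH vsH \<and> list_all2 RT ysH GmH \<and> teq A (tr C) \<and> L_der GmH C \<and>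
      k < length ysH \<and> hE H ! i = (ysH ! k, [vsH ! k, vsH ! Suc k]) \<and> GmH ! k = A1" if N: "teq N (tr A1)" for A1
  proof -
    obtain GmH C ysH vsH where ih: "is_path H ysH vsH" "list_all2 RT ysH GmH" "teq A (tr C)" "L_der GmH C"
      using HL_div_l(5)[OF lH[OF N] HL_div_l(12)] by blast
    have "hE H ! i \<in> set (pedges vsH ysH)" using ih(1) HL_div_l(6) unfolding is_path_def by (metis nth_mem set_mset_mset)
    then obtain k where k: "k < length ysH" "hE H ! i = (ysH ! k, [vsH ! k, vsH ! Suc k])" by (auto simp: mem_pedges)
    have "N = ysH ! k" using k HL_div_l(7) by simp
    then have "RT N (GmH ! k)" using ih(2) k(1) by (simp add: list_all2_conv_all_nth)
    then have "GmH ! k = A1" using teq_tr_same N wD(1) by blast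
    then show ?thesis using ih k by blast
  qed
  have lHs: "fst ` set (hE (Hs j1)) \<subseteq> fst ` set (hE G)"
    if "repl_many D'' f = repl D'' j1 (map_hg Some (Hs j1))" for j1
  proof -
    have "fst ` set (hE (map_hg Some (Hs j1))) \<subseteq> fst ` set (hE (repl D'' j1 (map_hg Some (Hs j1))))"
      unfolding labels_repl by blast
    then have "fst ` set (hE (map_hg Some (Hs j1))) \<subseteq> fst ` set (hE (repl_many D'' f))" using that by simp
    then have "the ` fst ` set (hE (map_hg Some (Hs j1))) \<subseteq> the ` fst ` set (hE (repl_many D'' f))"
      by (rule image_mono)
    also have "\<dots> = fst ` set (hE Inner)" unfolding Inner_def labels_map_hg ..
    also have "\<dots> \<subseteq> fst ` set (hE G)" by (rule lI)
    finally have 1: "the ` fst ` set (hE (map_hg Some (Hs j1))) \<subseteq> fst ` set (hE G)" .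
    have "the ` fst ` set (hE (map_hg Some (Hs j1))) = fst ` set (hE (Hs j1))"
      unfolding labels_map_hg image_image by simp
    then show ?thesis using 1 by simp
  qed
  from tX show ?case
  proof (cases rule: teq_tr_cases)
    case (sl A1 B1 N' D')
    then have N: "teq N (tr A1)" and gD: "giso (rel_option teq) D (string_graph [None, Some (tr B1)])"
      by (auto simp: Z_def)
    obtain ysD vsD where pD: "is_path D ysD vsD" "list_all2 (rel_option teq) ysD [None, Some (tr B1)]"
      using path_rev[OF gD string_is_path wDa] by blast
    obtain b' where ab: "ysD = [None, Some b']" "teq b' (tr B1)"
      using pD(2) by (auto simp: list_all2_Cons2 option_rel_Some2)
    obtain g0 g1 g2 where vsD: "vsD = [g0, g1, g2]" using pD(1) ab(1) unfolding is_path_def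
      by (auto simp: length_Suc_conv)
    have pD1: "is_path D [None, Some b'] [g0, g1, g2]" using pD(1) ab vsD by simp
    have "Some b' \<in> fst ` set (hE D)" using path_labels[OF pD1] by simp
    then have wb: "wf_tp b'" using labels_all[where P = "\<lambda>l. \<forall>T. l = Some T \<longrightarrow> wf_tp T", OF wD(3)] by blast
    have E: "hE D = [(None, [g0, g1]), (Some b', [g1, g2])] \<or> hE D = [(Some b', [g1, g2]), (None, [g0, g1])]"
      by (rule two_edges[OF pD1])
    have l2: "length (hE D) = 2" using E by auto
    define j1 where "j1 = 1 - j0"
    have j0: "j0 < 2" using HL_div_l(2) l2 by simp
    then have j01: "j0 = 0 \<or> j0 = 1" by auto
    have ej1: "hE D ! j1 = (Some b', [g1, g2])" "j1 < 2" "j1 \<noteq> j0"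
      using E HL_div_l(3) j01 by (auto simp: j1_def)
    have hD'': "hE D'' = (if j0 = 0 then [(Some Z, [g0, g1]), (Some b', [g1, g2])] else [(Some b', [g1, g2]), (Some Z, [g0, g1])])"
      using E HL_div_l(3) j01 by (auto simp: D''_def)
    have "is_path D'' [Some Z, Some b'] [g0, g1, g2]"
      by (rule path_relabel[OF pD1]) (use hD'' in \<open>auto simp: D''_def pedges_Cons2 add_mset_commute\<close>)
    then have pD'': "is_path D'' ([Some Z] @ Some b' # []) ([g0] @ g1 # g2 # [])" by simp
    have eD'': "j1 < length (hE D'')" "hE D'' ! j1 = (Some b', [g1, g2])"
      using hD'' j01 by (auto simp: j1_def)
    have rm: "repl_many D'' f = repl D'' j1 (map_hg Some (Hs j1))"
      using repl_many2[of D'' j0 "\<lambda>j. map_hg Some (Hs j)"] lD'' l2 j0 by (simp add: f_def j1_def)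
    have "HL_der (Hs j1) (the (fst (hE D ! j1))) \<and>
      ((\<forall>x\<in>set (hE (Hs j1)). \<exists>B. teq (fst x) (tr B)) \<longrightarrow> (\<exists>B. teq (the (fst (hE D ! j1))) (tr B)) \<longrightarrow>
       (\<exists>Gm C ys vs. is_path (Hs j1) ys vs \<and> list_all2 RT ys Gm \<and> teq (the (fst (hE D ! j1))) (tr C) \<and> L_der Gm C))"
      by (rule HL_div_l(8)[rule_format]) (use ej1 l2 in auto)
    moreover have "\<forall>x\<in>set (hE (Hs j1)). \<exists>B. teq (fst x) (tr B)" using lHs[OF rm] labels_all[OF HL_div_l(11)] by blast
    ultimately obtain P CP ysP wsP where iP: "is_path (Hs j1) ysP wsP" "list_all2 RT ysP P" "teq b' (tr CP)" "L_der P CP"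
      using ej1 ab(2) by auto
    have CP: "CP = B1" using teq_tr_same[OF iP(3) ab(2) wb] .
    have neP: "P \<noteq> []" "ysP \<noteq> []" using L_ne[OF iP(4)] iP(2) by (auto simp: list_all2_lengthD)
    have "is_path (repl D'' j1 (map_hg Some (Hs j1))) ([Some Z] @ map Some ysP @ [])
       ([g0] @ g1 # map ((+) (Suc (Max (insert 0 (hV D''))))) (butlast (tl wsP)) @ g2 # [])"
      by (rule repl_fwd[OF pD'' _ eD'' is_path_map[OF iP(1)]]) (use neP in auto)
    then have "is_path Inner (map the ([Some Z] @ map Some ysP @ []))
       ([g0] @ g1 # map ((+) (Suc (Max (insert 0 (hV D''))))) (butlast (tl wsP)) @ g2 # [])"
      unfolding Inner_def rm by (rule is_path_map)
    then have pI: "is_path Inner (Z # ysP) ([g0] @ g1 # map ((+) (Suc (Max (insert 0 (hV D''))))) (butlast (tl wsP)) @ g2 # [])"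
      by (simp add: o_def)
    obtain k GmH C ysH vsH where ih: "is_path H ysH vsH" "list_all2 RT ysH GmH" "teq A (tr C)" "L_der GmH C"
      "k < length ysH" "hE H ! i = (ysH ! k, [vsH ! k, vsH ! Suc k])" "GmH ! k = A1"
      using IHH[OF N] by blast
    note sp = path_split_at[OF ih(1,5)]
    obtain vsG where pG: "is_path G (take k ysH @ (Z # ysP) @ drop (Suc k) ysH) vsG"
      using repl_fwd[OF sp _ ih(6) pI] HL_div_l(6) G by auto
    have lk: "k < length GmH" using ih(2,5) by (simp add: list_all2_lengthD)
    have GmH: "GmH = take k GmH @ [A1] @ drop (Suc k) GmH" using lk ih(7) id_take_nth_drop by fastforce
    have "L_der (take k GmH @ [LSl A1 B1] @ P @ drop (Suc k) GmH) C"
      using L_sl_l[OF neP(1), of B1 "take k GmH" A1 "drop (Suc k) GmH" C] iP(4) CP ih(4) GmH by simp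
    moreover have "list_all2 RT (take k ysH @ (Z # ysP) @ drop (Suc k) ysH) (take k GmH @ [LSl A1 B1] @ P @ drop (Suc k) GmH)"
      using ih(2) iP(2) tX sl(1) by (auto intro!: list_all2_appendI list_all2_takeI list_all2_dropI)
    ultimately show ?thesis using pG ih(3) by blast
  next
    case (bs A1 B1 N' D')
    then have N: "teq N (tr A1)" and gD: "giso (rel_option teq) D (string_graph [Some (tr B1), None])"
      by (auto simp: Z_def)
    obtain ysD vsD where pD: "is_path D ysD vsD" "list_all2 (rel_option teq) ysD [Some (tr B1), None]"
      using path_rev[OF gD string_is_path wDa] by blast
    obtain b' where ab: "ysD = [Some b', None]" "teq b' (tr B1)"
      using pD(2) by (auto simp: list_all2_Cons2 option_rel_Some2)
    obtain g0 g1 g2 where vsD: "vsD = [g0, g1, g2]" using pD(1) ab(1) unfolding is_path_def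
      by (auto simp: length_Suc_conv)
    have pD1: "is_path D [Some b', None] [g0, g1, g2]" using pD(1) ab vsD by simp
    have "Some b' \<in> fst ` set (hE D)" using path_labels[OF pD1] by simp
    then have wb: "wf_tp b'" using labels_all[where P = "\<lambda>l. \<forall>T. l = Some T \<longrightarrow> wf_tp T", OF wD(3)] by blast
    have E: "hE D = [(Some b', [g0, g1]), (None, [g1, g2])] \<or> hE D = [(None, [g1, g2]), (Some b', [g0, g1])]"
      by (rule two_edges[OF pD1])
    have l2: "length (hE D) = 2" using E by auto
    define j1 where "j1 = 1 - j0"
    have j0: "j0 < 2" using HL_div_l(2) l2 by simp
    then have j01: "j0 = 0 \<or> j0 = 1" by auto
    have ej1: "hE D ! j1 = (Some b', [g0, g1])" "j1 < 2" "j1 \<noteq> j0"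
      using E HL_div_l(3) j01 by (auto simp: j1_def)
    have hD'': "hE D'' = (if j0 = 1 then [(Some b', [g0, g1]), (Some Z, [g1, g2])] else [(Some Z, [g1, g2]), (Some b', [g0, g1])])"
      using E HL_div_l(3) j01 by (auto simp: D''_def)
    have "is_path D'' [Some b', Some Z] [g0, g1, g2]"
      by (rule path_relabel[OF pD1]) (use hD'' in \<open>auto simp: D''_def pedges_Cons2 add_mset_commute\<close>)
    then have pD'': "is_path D'' ([] @ Some b' # [Some Z]) ([] @ g0 # g1 # [g2])" by simp
    have eD'': "j1 < length (hE D'')" "hE D'' ! j1 = (Some b', [g0, g1])"
      using hD'' j01 by (auto simp: j1_def)
    have rm: "repl_many D'' f = repl D'' j1 (map_hg Some (Hs j1))"
      using repl_many2[of D'' j0 "\<lambda>j. map_hg Some (Hs j)"] lD'' l2 j0 by (simp add: f_def j1_def)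
    have "HL_der (Hs j1) (the (fst (hE D ! j1))) \<and>
      ((\<forall>x\<in>set (hE (Hs j1)). \<exists>B. teq (fst x) (tr B)) \<longrightarrow> (\<exists>B. teq (the (fst (hE D ! j1))) (tr B)) \<longrightarrow>
       (\<exists>Gm C ys vs. is_path (Hs j1) ys vs \<and> list_all2 RT ys Gm \<and> teq (the (fst (hE D ! j1))) (tr C) \<and> L_der Gm C))"
      by (rule HL_div_l(8)[rule_format]) (use ej1 l2 in auto)
    moreover have "\<forall>x\<in>set (hE (Hs j1)). \<exists>B. teq (fst x) (tr B)" using lHs[OF rm] labels_all[OF HL_div_l(11)] by blast
    ultimately obtain P CP ysP wsP where iP: "is_path (Hs j1) ysP wsP" "list_all2 RT ysP P" "teq b' (tr CP)" "L_der P CP"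
      using ej1 ab(2) by auto
    have CP: "CP = B1" using teq_tr_same[OF iP(3) ab(2) wb] .
    have neP: "P \<noteq> []" "ysP \<noteq> []" using L_ne[OF iP(4)] iP(2) by (auto simp: list_all2_lengthD)
    have "is_path (repl D'' j1 (map_hg Some (Hs j1))) ([] @ map Some ysP @ [Some Z])
       ([] @ g0 # map ((+) (Suc (Max (insert 0 (hV D''))))) (butlast (tl wsP)) @ g1 # [g2])"
      by (rule repl_fwd[OF pD'' _ eD'' is_path_map[OF iP(1)]]) (use neP in auto)
    then have "is_path Inner (map the ([] @ map Some ysP @ [Some Z]))
       ([] @ g0 # map ((+) (Suc (Max (insert 0 (hV D''))))) (butlast (tl wsP)) @ g1 # [g2])"
      unfolding Inner_def rm by (rule is_path_map)
    then have pI: "is_path Inner (ysP @ [Z]) ([] @ g0 # map ((+) (Suc (Max (insert 0 (hV D''))))) (butlast (tl wsP)) @ g1 # [g2])"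
      by (simp add: o_def)
    obtain k GmH C ysH vsH where ih: "is_path H ysH vsH" "list_all2 RT ysH GmH" "teq A (tr C)" "L_der GmH C"
      "k < length ysH" "hE H ! i = (ysH ! k, [vsH ! k, vsH ! Suc k])" "GmH ! k = A1"
      using IHH[OF N] by blast
    note sp = path_split_at[OF ih(1,5)]
    obtain vsG where pG: "is_path G (take k ysH @ (ysP @ [Z]) @ drop (Suc k) ysH) vsG"
      using repl_fwd[OF sp _ ih(6) pI] HL_div_l(6) G by auto
    have lk: "k < length GmH" using ih(2,5) by (simp add: list_all2_lengthD)
    have GmH: "GmH = take k GmH @ [A1] @ drop (Suc k) GmH" using lk ih(7) id_take_nth_drop by fastforce
    have "L_der (take k GmH @ P @ [LBs B1 A1] @ drop (Suc k) GmH) C"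
      using L_bs_l[OF neP(1), of B1 "take k GmH" A1 "drop (Suc k) GmH" C] iP(4) CP ih(4) GmH by simp
    moreover have "list_all2 RT (take k ysH @ (ysP @ [Z]) @ drop (Suc k) ysH) (take k GmH @ P @ [LBs B1 A1] @ drop (Suc k) GmH)"
      using ih(2) iP(2) tX bs(1) by (auto intro!: list_all2_appendI list_all2_takeI list_all2_dropI)
    ultimately show ?thesis using pG ih(3) by blast
  qed (auto simp: Z_def)
qed

theorem theorem1:
  shows "(\<forall>\<Gamma> C. L_der \<Gamma> C \<longrightarrow> HL_der (fst (tr_seq \<Gamma> C)) (snd (tr_seq \<Gamma> C)))
       \<and> (\<forall>G T. HL_der G T
            \<longrightarrow> (\<forall>x\<in>set (hE G). \<exists>A. teq (fst x) (tr A))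
            \<longrightarrow> (\<exists>A. teq T (tr A))
            \<longrightarrow> (\<exists>\<Gamma> C. giso teq G (fst (tr_seq \<Gamma> C)) \<and> teq T (snd (tr_seq \<Gamma> C))
                       \<and> L_der \<Gamma> C))"
proof (intro conjI allI impI)
  fix Gm C assume "L_der Gm C"
  then show "HL_der (fst (tr_seq Gm C)) (snd (tr_seq Gm C))" using part1 by (simp add: tr_seq_def)
next
  fix G T assume "HL_der G T" "\<forall>x\<in>set (hE G). \<exists>A. teq (fst x) (tr A)" "\<exists>A. teq T (tr A)"
  then obtain Gm C ys vs where p: "is_path G ys vs" "list_all2 RT ys Gm" "teq T (tr C)" "L_der Gm C"
    using part2 by blast
  have "list_all2 teq ys (map tr Gm)" using p(2) by (simp add: list_all2_map2)
  then have "giso teq G (string_graph (map tr Gm))" by (rule path_giso[OF p(1) string_is_path])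
  then show "\<exists>Gm C. giso teq G (fst (tr_seq Gm C)) \<and> teq T (snd (tr_seq Gm C)) \<and> L_der Gm C"
    using p(3,4) by (auto simp: tr_seq_def)
qed

end
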